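(* Let $q=2$, $r\ge3$ and $m=2r$. Let $D=\{x\in\mathbb{F}_{2^m}:\mathrm{Tr}_{2^r/2}(x^{2^r+1})=0\}$ and $\overline{\mathcal{C}_D}=\{(\mathrm{Tr}_{2^m/2}(bx)+c)_{x\in D}: b\in\mathbb{F}_{2^m},\ c\in\mathbb{F}_2\}$. Then $\overline{\mathcal{C}_D}$ is a $(2^{r-1}(2^r-1),\ m+1,\ 2^{r-1}(2^{r-1}-1),\ 2;\ 3)$-LRC and $\overline{\mathcal{C}_D}^{\perp}$ is a $(2^{r-1}(2^r-1),\ 2^{r-1}(2^r-1)-m-1,\ 4,\ 2;\ 2^{r-1}(2^{r-1}-1)-1)$-LRC. In particular, $\overline{\mathcal{C}_D}^{\perp}$ is $k$-optimal or almost $k$-optimal.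
   Context: For an $[n,k,d]$ linear code $\mathcal{C}$ over $\mathbb{F}_q$ with coordinates indexed by $\{0,\dots,n-1\}$, coordinate $i$ has a repair set $R_i\subseteq\{0,\dots,n-1\}\setminus\{i\}$ of size $r$ if there is a function $f_i$ with $c_i=f_i(\mathbf{c}_{R_i})$ for all $\mathbf{c}\in\mathcal{C}$; the locality of $\mathcal{C}$ is the smallest $r$ such that every coordinate has a repair set of size $r$, and then $\mathcal{C}$ is called an $(n,k,d,q;r)$-LRC. The Cadambe–Mazumdar bound states $k\le\min_{t\in\mathbb{Z}^+}[rt+k^{(q)}_{opt}(n-t(r+1),d)]$, where $k^{(q)}_{opt}(n,d)$ is the largest dimension of a $q$-ary linear code of length $n$ and minimum distance $d$. An LRC is $k$-optimal if it meets this bound with equality, and almost $k$-optimal if $k$ equals the bound minus one. *)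

theory Defs
  imports Main "HOL-Library.Z2"
begin

definition words :: "'i set \<Rightarrow> ('i \<Rightarrow> 'f::field) set" where
  "words I = {v. \<forall>i. i \<notin> I \<longrightarrow> v i = 0}"

definition linear_code :: "'i set \<Rightarrow> ('i \<Rightarrow> 'f::field) set \<Rightarrow> bool" where
  "linear_code I C \<longleftrightarrow> finite I \<and> C \<subseteq> words I \<and> (\<lambda>_. 0) \<in> C \<and>
     (\<forall>u\<in>C. \<forall>v\<in>C. (\<lambda>i. u i + v i) \<in> C) \<and>
     (\<forall>a. \<forall>v\<in>C. (\<lambda>i. a * v i) \<in> C)"

definition hweight :: "'i set \<Rightarrow> ('i \<Rightarrow> 'f::field) \<Rightarrow> nat" where
  "hweight I v = card {i\<in>I. v i \<noteq> 0}"

definition min_dist :: "'i set \<Rightarrow> ('i \<Rightarrow> 'f::field) set \<Rightarrow> nat" where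
  "min_dist I C = Min {hweight I v | v. v \<in> C \<and> v \<noteq> (\<lambda>_. 0)}"

definition is_code :: "'i set \<Rightarrow> ('i \<Rightarrow> 'f::field) set \<Rightarrow> nat \<Rightarrow> nat \<Rightarrow> nat \<Rightarrow> bool" where
  "is_code I C n k d \<longleftrightarrow> linear_code I C \<and> card I = n \<and> card C = card (UNIV :: 'f set) ^ k \<and>
     min_dist I C = d"

definition dual_code :: "'i set \<Rightarrow> ('i \<Rightarrow> 'f::field) set \<Rightarrow> ('i \<Rightarrow> 'f) set" where
  "dual_code I C = {v \<in> words I. \<forall>c\<in>C. (\<Sum>i\<in>I. v i * c i) = 0}"

definition repair_set :: "'i set \<Rightarrow> ('i \<Rightarrow> 'f::field) set \<Rightarrow> 'i \<Rightarrow> 'i set \<Rightarrow> bool" where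
  "repair_set I C i R \<longleftrightarrow> R \<subseteq> I - {i} \<and>
     (\<exists>f. \<forall>c\<in>C. c i = f (\<lambda>j. if j \<in> R then c j else 0))"

definition locality :: "'i set \<Rightarrow> ('i \<Rightarrow> 'f::field) set \<Rightarrow> nat" where
  "locality I C = (LEAST r. \<forall>i\<in>I. \<exists>R. repair_set I C i R \<and> card R = r)"

definition is_LRC :: "'i set \<Rightarrow> ('i \<Rightarrow> 'f::field) set \<Rightarrow> nat \<Rightarrow> nat \<Rightarrow> nat \<Rightarrow> nat \<Rightarrow> nat \<Rightarrow> bool" where
  "is_LRC I C n k d q r \<longleftrightarrow> is_code I C n k d \<and> card (UNIV :: 'f set) = q \<and> locality I C = r"

definition k_opt :: "'f::field itself \<Rightarrow> nat \<Rightarrow> nat \<Rightarrow> nat" where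
  "k_opt _ n d = Max {k. \<exists>C :: (nat \<Rightarrow> 'f) set. linear_code {0..<n} C \<and>
       card C = card (UNIV :: 'f set) ^ k \<and> (\<forall>v\<in>C. v \<noteq> (\<lambda>_. 0) \<longrightarrow> d \<le> hweight {0..<n} v)}"

definition CM_bound :: "'f::field itself \<Rightarrow> nat \<Rightarrow> nat \<Rightarrow> nat \<Rightarrow> nat" where
  "CM_bound F n d r = Inf ((\<lambda>t. r * t + k_opt F (n - t * (r + 1)) d) ` {t. t \<ge> 1})"

definition k_optimal :: "'i set \<Rightarrow> ('i \<Rightarrow> 'f::field) set \<Rightarrow> bool" where
  "k_optimal I C \<longleftrightarrow> (\<exists>n k d r. is_LRC I C n k d (card (UNIV :: 'f set)) r \<and> k = CM_bound TYPE('f) n d r)"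

definition almost_k_optimal :: "'i set \<Rightarrow> ('i \<Rightarrow> 'f::field) set \<Rightarrow> bool" where
  "almost_k_optimal I C \<longleftrightarrow>
     (\<exists>n k d r. is_LRC I C n k d (card (UNIV :: 'f set)) r \<and> k + 1 = CM_bound TYPE('f) n d r)"

text \<open>Absolute trace Tr_{2^m/2}(y) = sum_{i<m} y^(2^i) and relative trace to F_2 of F_{2^r}.\<close>
definition trace2 :: "nat \<Rightarrow> 'a::field \<Rightarrow> 'a" where
  "trace2 m y = (\<Sum>i<m. y ^ (2 ^ i))"

text \<open>Identification of the prime field {0,1} of 'a with bit.\<close>
definition to_bit :: "'a::field \<Rightarrow> bit" where
  "to_bit y = (if y = 0 then 0 else 1)"

definition defining_set :: "nat \<Rightarrow> 'a::field set" where
  "defining_set r = {x. trace2 r (x ^ (2 ^ r + 1)) = 0}"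

definition code_CD_bar :: "nat \<Rightarrow> 'a::field set \<Rightarrow> ('a \<Rightarrow> bit) set" where
  "code_CD_bar m D = {(\<lambda>x. if x \<in> D then to_bit (trace2 m (b * x)) + c else 0) | b c. True}"

end

theory Submission
  imports Defs "HOL-Computational_Algebra.Primes" "HOL-Computational_Algebra.Polynomial"
begin

declare add_bit_eq_xor[simp del] mult_bit_eq_and[simp del]

lemma bit_cases2: "(x::bit) = 0 \<or> x = 1" by (cases x) auto
lemma bit_add_self[simp]: "(x::bit) + x = 0" by (cases x) auto
lemma bit_eq_iff_add: "((x::bit) = y) \<longleftrightarrow> x + y = 0" by (cases x; cases y) auto
lemma card_UNIV_bit: "card (UNIV::bit set) = 2"
proof -
  have "(UNIV::bit set) = {0,1}" using bit_cases2 by auto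
  moreover have "card {0,1::bit} = 2" by simp
  ultimately show ?thesis by simp
qed
lemma UNIV_bit: "(UNIV::bit set) = {0,1}" using bit_cases2 by auto
lemma finite_UNIV_bit: "finite (UNIV::bit set)" by (simp add: UNIV_bit)

lemma words_bij: "bij_betw (\<lambda>v. {i. v i = (1::bit)}) (words I :: ('i \<Rightarrow> bit) set) (Pow I)"
proof (rule bij_betw_byWitness[where f' = "\<lambda>S i. if i \<in> S then 1 else 0"])
  show "\<forall>a\<in>(words I :: ('i \<Rightarrow> bit) set). (\<lambda>i. if i \<in> {i. a i = 1} then 1 else 0) = a"
  proof (intro ballI)
    fix a :: "'i \<Rightarrow> bit" assume "a \<in> words I"
    show "(\<lambda>i. if i \<in> {i. a i = 1} then 1 else 0) = a"
    proof
      fix i show "(if i \<in> {i. a i = 1} then 1 else 0) = a i" using bit_cases2[of "a i"] by auto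
    qed
  qed
  show "\<forall>a'\<in>Pow I. {i. (if i \<in> a' then 1 else 0) = (1::bit)} = a'" by auto
  show "(\<lambda>v. {i. v i = (1::bit)}) ` words I \<subseteq> Pow I" by (auto simp: words_def)
  show "(\<lambda>S i. if i \<in> S then 1 else 0) ` Pow I \<subseteq> (words I :: ('i \<Rightarrow> bit) set)"
    by (auto simp: words_def)
qed

lemma card_words: "finite I \<Longrightarrow> card (words I :: ('i \<Rightarrow> bit) set) = 2 ^ card I"
  using bij_betw_same_card[OF words_bij[of I]] card_Pow[of I] 
  by simp
lemma finite_words: "finite I \<Longrightarrow> finite (words I :: ('i \<Rightarrow> bit) set)"
  using bij_betw_finite[OF words_bij[of I]] by simp

definition sgnb :: "bit \<Rightarrow> int" where "sgnb x = (if x = 0 then 1 else -1)"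
lemma sgnb_add: "sgnb (x + y) = sgnb x * sgnb y"
  by (cases x; cases y) (auto simp: sgnb_def)
lemma sgnb_add1: "sgnb (x + 1) = - sgnb x"
  by (cases x) (auto simp: sgnb_def)

lemma sum_flip_zero:
  fixes f :: "'b \<Rightarrow> int"
  assumes "bij_betw g A A" "\<And>x. x \<in> A \<Longrightarrow> f (g x) = - f x"
  shows "sum f A = 0"
proof -
  have "sum f A = sum (f \<circ> g) A" using sum.reindex_bij_betw[OF assms(1), of f] by simp
  also have "\<dots> = - sum f A" using assms(2) by (simp add: sum_negf)
  finally show ?thesis by simp
qed

lemma linear_code_sub:
  assumes "linear_code I (C :: ('i \<Rightarrow> bit) set)" "u \<in> C" "v \<in> C"
  shows "(\<lambda>i. u i + v i) \<in> C"
  using assms unfolding linear_code_def by blast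

lemma inner_add_left:
  "(\<Sum>i\<in>I. (u i + w i) * c i) = (\<Sum>i\<in>I. u i * c i) + (\<Sum>i\<in>I. w i * (c i :: bit))"
  by (simp only: distrib_right sum.distrib)
lemma inner_add_right:
  "(\<Sum>i\<in>I. v i * (u i + w i)) = (\<Sum>i\<in>I. v i * u i) + (\<Sum>i\<in>I. v i * (w i :: bit))"
  by (simp only: distrib_left sum.distrib)

lemma card_code_dual:
  assumes lc: "linear_code I (C :: ('i \<Rightarrow> bit) set)"
  shows "card C * card (dual_code I C) = 2 ^ card I"
proof -
  let ?W = "words I :: ('i \<Rightarrow> bit) set"
  let ?ip = "\<lambda>v c. \<Sum>i\<in>I. v i * c i"
  have fI: "finite I" and CW: "C \<subseteq> ?W" and z: "(\<lambda>_. 0) \<in> C" using lc by (auto simp: linear_code_def)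
  have fW: "finite ?W" using finite_words[OF fI] .
  have fC: "finite C" using finite_subset[OF CW fW] .
  define S where "S = (\<Sum>v\<in>?W. \<Sum>c\<in>C. sgnb (?ip v c))"
  have inner1: "(\<Sum>v\<in>?W. sgnb (?ip v c)) = (if c = (\<lambda>_. 0) then 2 ^ card I else 0)" if "c \<in> C" for c
  proof (cases "c = (\<lambda>_. 0)")
    case True
    then show ?thesis using card_words[OF fI] by (simp add: sgnb_def)
  next
    case False
    then obtain j where cj: "c j \<noteq> 0" by (auto simp: fun_eq_iff simp del: bit_not_zero_iff)
    have jI: "j \<in> I"
    proof (rule ccontr)
      assume "j \<notin> I" hence "c j = 0" using CW that unfolding words_def by blast
      thus False using cj by simp
    qed
    define e where "e = (\<lambda>i. if i = j then (1::bit) else 0)"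
    let ?g = "\<lambda>v i. v i + e i"
    have eW: "e \<in> ?W" using jI by (auto simp: e_def words_def)
    have gW: "?g v \<in> ?W" if "v \<in> ?W" for v using that eW by (auto simp: words_def)
    have bij: "bij_betw ?g ?W ?W"
      by (rule bij_betw_byWitness[where f' = ?g]) (auto simp: gW add.assoc)
    have "?ip (?g v) c = ?ip v c + 1" for v
    proof -
      have "?ip (?g v) c = ?ip v c + ?ip e c" by (rule inner_add_left)
      moreover have "?ip e c = c j"
      proof -
        have "?ip e c = (\<Sum>i\<in>I. if i = j then c i else 0)" by (rule sum.cong) (auto simp: e_def)
        thus ?thesis using jI fI by (simp add: sum.delta)
      qed
      ultimately show ?thesis using cj by simp
    qed
    hence "(\<Sum>v\<in>?W. sgnb (?ip v c)) = 0"
      by (intro sum_flip_zero[OF bij]) (simp add: sgnb_add1)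
    thus ?thesis using False by simp
  qed
  have inner2: "(\<Sum>c\<in>C. sgnb (?ip v c)) = (if v \<in> dual_code I C then int (card C) else 0)"
    if vW: "v \<in> ?W" for v
  proof (cases "v \<in> dual_code I C")
    case True
    then show ?thesis by (simp add: dual_code_def sgnb_def)
  next
    case False
    then obtain c0 where c0: "c0 \<in> C" "?ip v c0 \<noteq> 0" using vW unfolding dual_code_def by blast
    let ?g = "\<lambda>c i. c i + c0 i"
    have bij: "bij_betw ?g C C"
      by (rule bij_betw_byWitness[where f' = ?g]) (auto simp: linear_code_sub[OF lc] c0 add.assoc)
    have "?ip v (?g c) = ?ip v c + 1" for c using inner_add_right[of v] c0(2) by simp
    hence "(\<Sum>c\<in>C. sgnb (?ip v c)) = 0"
      by (intro sum_flip_zero[OF bij]) (simp add: sgnb_add1)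
    thus ?thesis using False by simp
  qed
  have "S = (\<Sum>c\<in>C. \<Sum>v\<in>?W. sgnb (?ip v c))" unfolding S_def by (rule sum.swap)
  also have "\<dots> = (\<Sum>c\<in>C. if c = (\<lambda>_. 0) then 2 ^ card I else 0)" using inner1 by simp
  also have "\<dots> = 2 ^ card I" using z fC by (simp add: sum.delta)
  finally have S1: "S = 2 ^ card I" .
  have "S = (\<Sum>v\<in>?W. if v \<in> dual_code I C then int (card C) else 0)" unfolding S_def using inner2 by simp
  also have "\<dots> = (\<Sum>v\<in>dual_code I C. int (card C))"
    using fW sum.If_cases[of ?W "\<lambda>v. v \<in> dual_code I C" "\<lambda>_. int (card C)" "\<lambda>_. 0"]
    by (simp add: dual_code_def Int_def)
  also have "\<dots> = int (card C) * int (card (dual_code I C))" by simp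
  finally show ?thesis using S1 by (metis of_nat_eq_iff of_nat_mult of_nat_numeral of_nat_power)
qed


lemma dual_words: "dual_code I C \<subseteq> words I" by (auto simp: dual_code_def)

lemma dual_linear:
  assumes "finite I"
  shows "linear_code I (dual_code I (C::('i \<Rightarrow> bit) set))"
  unfolding linear_code_def
proof (intro conjI ballI allI)
  show "finite I" by fact
  show "dual_code I C \<subseteq> words I" by (rule dual_words)
  show "(\<lambda>_. 0) \<in> dual_code I C" by (simp add: dual_code_def words_def)
  fix u v assume u: "u \<in> dual_code I C" and v: "v \<in> dual_code I C"
  show "(\<lambda>i. u i + v i) \<in> dual_code I C"
  proof -
    have "(\<Sum>i\<in>I. (u i + v i) * c i) = 0" if "c \<in> C" for c
      using inner_add_left[of u v c I] u v that unfolding dual_code_def by simp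
    thus ?thesis using u v unfolding dual_code_def words_def by auto
  qed
next
  fix a :: bit and v assume v: "v \<in> dual_code I C"
  have "(\<Sum>i\<in>I. a * v i * c i) = a * (\<Sum>i\<in>I. v i * c i)" for c
    by (simp add: sum_distrib_left mult.assoc)
  thus "(\<lambda>i. a * v i) \<in> dual_code I C"
    using v unfolding dual_code_def words_def by auto
qed

lemma double_dual:
  assumes lc: "linear_code I (C::('i \<Rightarrow> bit) set)"
  shows "dual_code I (dual_code I C) = C"
proof -
  have fI: "finite I" and CW: "C \<subseteq> words I" using lc by (auto simp: linear_code_def)
  have sub: "C \<subseteq> dual_code I (dual_code I C)"
  proof
    fix c assume c: "c \<in> C"
    have "(\<Sum>i\<in>I. c i * v i) = 0" if "v \<in> dual_code I C" for v
      using that c by (auto simp: dual_code_def mult.commute)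
    thus "c \<in> dual_code I (dual_code I C)" using c CW by (auto simp: dual_code_def)
  qed
  have l1: "card C * card (dual_code I C) = 2 ^ card I" by (rule card_code_dual[OF lc])
  have l2: "card (dual_code I C) * card (dual_code I (dual_code I C)) = 2 ^ card I"
    by (rule card_code_dual[OF dual_linear[OF fI]])
  have "(\<lambda>_. 0) \<in> dual_code I C" using dual_linear[OF fI] by (simp add: linear_code_def)
  moreover have "finite (dual_code I C)" using finite_subset[OF dual_words finite_words[OF fI]] .
  ultimately have "card (dual_code I C) > 0" by (simp add: card_gt_0_iff) blast
  hence "card C = card (dual_code I (dual_code I C))" using l1 l2 by (metis mult.commute mult_left_cancel neq0_conv)
  moreover have "finite (dual_code I (dual_code I C))" using finite_subset[OF dual_words finite_words[OF fI]] .
  ultimately show ?thesis using sub by (metis card_subset_eq)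
qed

lemma bit_of_nat: "(of_nat n :: bit) = (if even n then 0 else 1)"
  by (induction n) auto

lemma sum_bit_hweight:
  assumes "finite I"
  shows "(\<Sum>i\<in>I. v i) = (of_nat (hweight I v) :: bit)"
proof -
  have "(\<Sum>i\<in>I. v i) = (\<Sum>i\<in>{i\<in>I. v i \<noteq> 0}. v i)"
    using assms by (intro sum.mono_neutral_right) auto
  also have "\<dots> = (\<Sum>i\<in>{i\<in>I. v i \<noteq> 0}. 1)" by (rule sum.cong) auto
  also have "\<dots> = of_nat (hweight I v)" by (simp add: hweight_def)
  finally show ?thesis .
qed

lemma hweight_le: "finite I \<Longrightarrow> hweight I v \<le> card I"
  unfolding hweight_def by (rule card_mono) auto

lemma hweight_zero: "v \<in> words I \<Longrightarrow> finite I \<Longrightarrow> hweight I v = 0 \<Longrightarrow> v = (\<lambda>_. 0)"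
  unfolding hweight_def words_def by (auto simp: fun_eq_iff)

lemma min_dist_eq:
  assumes fI: "finite I"
    and low: "\<forall>v\<in>C. v \<noteq> (\<lambda>_. 0) \<longrightarrow> d \<le> hweight I v"
    and v0: "v0 \<in> C" "v0 \<noteq> (\<lambda>_. 0)" "hweight I v0 = d"
  shows "min_dist I C = d"
  unfolding min_dist_def
proof (rule Min_eqI)
  show "finite {hweight I v |v. v \<in> C \<and> v \<noteq> (\<lambda>_. 0)}"
    by (rule finite_subset[of _ "{..card I}"]) (auto simp: hweight_le[OF fI])
  show "\<And>y. y \<in> {hweight I v |v. v \<in> C \<and> v \<noteq> (\<lambda>_. 0)} \<Longrightarrow> d \<le> y" using low by auto
  show "d \<in> {hweight I v |v. v \<in> C \<and> v \<noteq> (\<lambda>_. 0)}" using v0 by auto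
qed

lemma repair_from_dual:
  fixes C :: "('i \<Rightarrow> bit) set"
  assumes u: "u \<in> dual_code I C" and i: "i \<in> I" "u i = 1" and fI: "finite I"
  shows "repair_set I C i ({j\<in>I. u j \<noteq> 0} - {i})"
  unfolding repair_set_def
proof (intro conjI)
  let ?R = "{j\<in>I. u j \<noteq> 0} - {i}"
  show "?R \<subseteq> I - {i}" by auto
  show "\<exists>f. \<forall>c\<in>C. c i = f (\<lambda>j. if j \<in> ?R then c j else 0)"
  proof (intro exI ballI)
    fix c assume c: "c \<in> C"
    have fR: "finite ?R" using fI by auto
    have "0 = (\<Sum>j\<in>I. u j * c j)" using u c by (auto simp: dual_code_def)
    also have "\<dots> = (\<Sum>j\<in>insert i ?R. u j * c j)"
      using fI i by (intro sum.mono_neutral_right) auto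
    also have "\<dots> = u i * c i + (\<Sum>j\<in>?R. u j * c j)" using fR by (subst sum.insert) auto
    also have "(\<Sum>j\<in>?R. u j * c j) = (\<Sum>j\<in>?R. c j)" by (rule sum.cong) auto
    finally have "c i + (\<Sum>j\<in>?R. c j) = 0" using i by simp
    hence "c i = (\<Sum>j\<in>?R. c j)" using bit_eq_iff_add by blast
    also have "\<dots> = (\<Sum>j\<in>?R. (\<lambda>j. if j \<in> ?R then c j else 0) j)" by (rule sum.cong) auto
    finally show "c i = (\<lambda>g. \<Sum>j\<in>?R. g j) (\<lambda>j. if j \<in> ?R then c j else 0)" by simp
  qed
qed


lemma dual_from_repair:
  fixes C :: "('i \<Rightarrow> bit) set"
  assumes lc: "linear_code I C" and iI: "i \<in> I" and rep: "repair_set I C i R"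
  shows "\<exists>u\<in>dual_code I C. u i = 1 \<and> (\<forall>j. u j \<noteq> 0 \<longrightarrow> j \<in> insert i R)"
proof (rule ccontr)
  assume nex: "\<not> ?thesis"
  have fI: "finite I" and CW: "C \<subseteq> words I" and z: "(\<lambda>_. 0) \<in> C"
    using lc by (auto simp: linear_code_def)
  have RI: "R \<subseteq> I - {i}" using rep by (simp add: repair_set_def)
  obtain f where f: "\<forall>c\<in>C. c i = f (\<lambda>j. if j \<in> R then c j else 0)"
    using rep by (auto simp: repair_set_def)
  define S where "S = insert i R"
  have SI: "S \<subseteq> I" using RI iI by (auto simp: S_def)
  have fS: "finite S" using finite_subset[OF SI fI] .
  define restr where "restr = (\<lambda>(e::'i \<Rightarrow> bit) j. if j \<in> S then e j else 0)"
  define P where "P = restr ` C"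
  have lcP: "linear_code S P"
    unfolding linear_code_def
  proof (intro conjI ballI allI)
    show "finite S" by fact
    show "P \<subseteq> words S" by (auto simp: P_def restr_def words_def)
    show "(\<lambda>_. 0) \<in> P" unfolding P_def using z by (intro image_eqI[of _ _ "\<lambda>_. 0"]) (auto simp: restr_def)
    fix u v assume "u \<in> P" "v \<in> P"
    then obtain cu cv where cu: "cu \<in> C" "u = restr cu" and cv: "cv \<in> C" "v = restr cv"
      by (auto simp: P_def)
    have "(\<lambda>i. u i + v i) = restr (\<lambda>i. cu i + cv i)" using cu cv by (auto simp: restr_def)
    moreover have "(\<lambda>i. cu i + cv i) \<in> C" using lc cu cv by (simp add: linear_code_def)
    ultimately show "(\<lambda>i. u i + v i) \<in> P" by (simp add: P_def)
  next
    fix a :: bit and v assume "v \<in> P"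
    then obtain cv where cv: "cv \<in> C" "v = restr cv" by (auto simp: P_def)
    have "(\<lambda>i. a * v i) = restr (\<lambda>i. a * cv i)" using cv by (auto simp: restr_def)
    moreover have "(\<lambda>i. a * cv i) \<in> C" using lc cv by (simp add: linear_code_def)
    ultimately show "(\<lambda>i. a * v i) \<in> P" by (simp add: P_def)
  qed
  define ei where "ei = (\<lambda>j. if j = i then (1::bit) else 0)"
  have "ei \<in> dual_code S (dual_code S P)"
  proof -
    have "ei \<in> words S" by (auto simp: ei_def words_def S_def)
    moreover have "(\<Sum>j\<in>S. ei j * v j) = 0" if v: "v \<in> dual_code S P" for v
    proof -
      have vS: "v \<in> words S" using v by (simp add: dual_code_def)
      have "v \<in> dual_code I C"
      proof -
        have "v \<in> words I" using vS SI by (auto simp: words_def)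
        moreover have "(\<Sum>j\<in>I. v j * c j) = 0" if c: "c \<in> C" for c
        proof -
          have "(\<Sum>j\<in>I. v j * c j) = (\<Sum>j\<in>S. v j * c j)"
            using fI SI vS by (intro sum.mono_neutral_right) (auto simp: words_def)
          also have "\<dots> = (\<Sum>j\<in>S. v j * restr c j)" by (rule sum.cong) (auto simp: restr_def)
          also have "\<dots> = 0" using v c by (auto simp: dual_code_def P_def)
          finally show ?thesis .
        qed
        ultimately show ?thesis by (simp add: dual_code_def)
      qed
      moreover have "\<forall>j. v j \<noteq> 0 \<longrightarrow> j \<in> insert i R" using vS by (auto simp: words_def S_def)
      ultimately have "v i \<noteq> 1" using nex by blast
      hence vi: "v i = 0" by simp
      have "(\<Sum>j\<in>S. ei j * v j) = (\<Sum>j\<in>S. if j = i then v j else 0)" by (rule sum.cong) (auto simp: ei_def)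
      also have "\<dots> = v i" using fS by (simp add: sum.delta S_def)
      finally show ?thesis using vi by simp
    qed
    ultimately show ?thesis by (simp add: dual_code_def)
  qed
  hence "ei \<in> P" using double_dual[OF lcP] by simp
  then obtain e where e: "e \<in> C" "ei = restr e" by (auto simp: P_def)
  have ei1: "e i = 1" using e(2) by (auto simp: restr_def ei_def S_def fun_eq_iff dest: spec[of _ i])
  have eR: "(\<lambda>j. if j \<in> R then e j else 0) = (\<lambda>_. 0)"
  proof
    fix j show "(if j \<in> R then e j else 0) = 0"
    proof (cases "j \<in> R")
      case True
      hence "j \<noteq> i" "j \<in> S" using RI by (auto simp: S_def)
      hence "e j = ei j" using e(2) by (simp add: restr_def)
      thus ?thesis using True \<open>j \<noteq> i\<close> by (simp add: ei_def)
    qed simp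
  qed
  have "e i = f (\<lambda>_. 0)" using f e(1) eR by metis
  moreover have "(0::bit) = f (\<lambda>_. 0)" using f z by auto
  ultimately show False using ei1 by simp
qed

lemma locality_eq:
  fixes C :: "('i \<Rightarrow> bit) set"
  assumes lc: "linear_code I C" and ne: "I \<noteq> {}"
    and low: "\<forall>u\<in>dual_code I C. u \<noteq> (\<lambda>_. 0) \<longrightarrow> d \<le> hweight I u"
    and cov: "\<forall>i\<in>I. \<exists>u\<in>dual_code I C. u i = 1 \<and> hweight I u = d"
  shows "locality I C = d - 1"
  unfolding locality_def
proof (rule Least_equality)
  have fI: "finite I" using lc by (simp add: linear_code_def)
  show "\<forall>i\<in>I. \<exists>R. repair_set I C i R \<and> card R = d - 1"
  proof
    fix i assume iI: "i \<in> I"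
    then obtain u where u: "u \<in> dual_code I C" "u i = 1" "hweight I u = d" using cov by blast
    have "card ({j\<in>I. u j \<noteq> 0} - {i}) = d - 1"
      using u iI fI by (simp add: hweight_def card_Diff_singleton)
    thus "\<exists>R. repair_set I C i R \<and> card R = d - 1"
      using repair_from_dual[OF u(1) iI u(2) fI] by blast
  qed
next
  fix y assume H: "\<forall>i\<in>I. \<exists>R. repair_set I C i R \<and> card R = y"
  obtain i where iI: "i \<in> I" using ne by blast
  then obtain R where R: "repair_set I C i R" "card R = y" using H by blast
  have fI: "finite I" using lc by (simp add: linear_code_def)
  have fR: "finite R" using R(1) fI by (auto simp: repair_set_def intro: finite_subset)
  obtain u where u: "u \<in> dual_code I C" "u i = 1" "\<forall>j. u j \<noteq> 0 \<longrightarrow> j \<in> insert i R"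
    using dual_from_repair[OF lc iI R(1)] by blast
  have "u \<noteq> (\<lambda>_. 0)" using u(2) by (auto simp: fun_eq_iff dest: spec[of _ i])
  hence "d \<le> hweight I u" using low u(1) by blast
  also have "\<dots> \<le> card (insert i R)"
    unfolding hweight_def using fR u(3) by (intro card_mono) auto
  also have "\<dots> \<le> Suc y" using fR R(2) by (simp add: card_insert_if)
  finally show "d - 1 \<le> y" by simp
qed

lemma bits_differ:
  fixes p q :: nat
  assumes "p < 2 ^ j" "q < 2 ^ j" "p \<noteq> q"
  shows "\<exists>k<j. bit p k \<noteq> bit q k"
proof (rule ccontr)
  assume "\<not> ?thesis"
  hence "take_bit j p = take_bit j q" by (intro bit_eqI) (auto simp: bit_take_bit_iff)
  thus False using assms take_bit_nat_eq_self_iff by metis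
qed

definition kset :: "nat \<Rightarrow> nat set" where
  "kset n = {k. \<exists>C :: (nat \<Rightarrow> bit) set. linear_code {0..<n} C \<and>
       card C = card (UNIV :: bit set) ^ k \<and> (\<forall>v\<in>C. v \<noteq> (\<lambda>_. 0) \<longrightarrow> 4 \<le> hweight {0..<n} v)}"

lemma k_opt_kset: "k_opt TYPE(bit) n 4 = Max (kset n)"
  unfolding k_opt_def kset_def by simp

lemma kset_le: "k \<in> kset n \<Longrightarrow> k \<le> n"
proof -
  assume "k \<in> kset n"
  then obtain C :: "(nat \<Rightarrow> bit) set" where C: "linear_code {0..<n} C" "card C = 2 ^ k"
    by (auto simp: kset_def card_UNIV_bit)
  have "card C \<le> card (words {0..<n} :: (nat \<Rightarrow> bit) set)"
    using C(1) by (intro card_mono finite_words) (auto simp: linear_code_def)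
  hence "(2::nat) ^ k \<le> 2 ^ n" using C(2) card_words[of "{0..<n}"] by simp
  thus ?thesis by simp
qed

lemma kset_finite: "finite (kset n)"
  by (rule finite_subset[of _ "{..n}"]) (auto dest: kset_le)

lemma kset_Max_in: "kset n \<noteq> {} \<Longrightarrow> k_opt TYPE(bit) n 4 \<in> kset n"
  unfolding k_opt_kset using kset_finite by (rule Max_in)

lemma kset_Max_ge: "k \<in> kset n \<Longrightarrow> k \<le> k_opt TYPE(bit) n 4"
  unfolding k_opt_kset using kset_finite by (rule Max_ge)

section \<open>Sphere packing\<close>

lemma sphere_packing:
  assumes "k \<in> kset N"
  shows "2 ^ k * (N + 1) \<le> (2::nat) ^ N"
proof -
  obtain C :: "(nat \<Rightarrow> bit) set" where lc: "linear_code {0..<N} C" and cC: "card C = 2 ^ k"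
    and w: "\<forall>v\<in>C. v \<noteq> (\<lambda>_. 0) \<longrightarrow> 4 \<le> hweight {0..<N} v"
    using assms by (auto simp: kset_def card_UNIV_bit)
  have fI: "finite {0..<N}" by simp
  have CW: "C \<subseteq> words {0..<N}" using lc by (simp add: linear_code_def)
  have fC: "finite C" using finite_subset[OF CW finite_words[OF fI]] .
  define e :: "nat \<Rightarrow> nat \<Rightarrow> bit" where "e = (\<lambda>i l. if l = i then 1 else 0)"
  define B where "B = (\<lambda>c. insert c ((\<lambda>i l. c l + e i l) ` {0..<N}))"
  have cardB: "card (B c) = N + 1" for c
  proof -
    have inj: "inj_on (\<lambda>i l. c l + e i l) {0..<N}"
    proof (rule inj_onI)
      fix i i' assume "(\<lambda>l. c l + e i l) = (\<lambda>l. c l + e i' l)"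
      hence "c i + e i i = c i + e i' i" by metis
      thus "i = i'" by (auto simp: e_def split: if_splits)
    qed
    have "c \<notin> (\<lambda>i l. c l + e i l) ` {0..<N}"
    proof
      assume "c \<in> (\<lambda>i l. c l + e i l) ` {0..<N}"
      then obtain i where "c = (\<lambda>l. c l + e i l)" by auto
      hence "c i = c i + e i i" by metis
      thus False by (simp add: e_def)
    qed
    thus ?thesis using inj by (simp add: B_def card_image)
  qed
  have Bprop: "\<exists>i. \<forall>l. x l \<noteq> c l \<longrightarrow> l = i" if "x \<in> B c" for x c
    using that by (auto simp: B_def e_def)
  have BW: "B c \<subseteq> words {0..<N}" if "c \<in> C" for c
    using that CW by (auto simp: B_def e_def words_def)
  have disj: "B c \<inter> B c' = {}" if cc: "c \<in> C" "c' \<in> C" "c \<noteq> c'" for c c'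
  proof (rule ccontr)
    assume "B c \<inter> B c' \<noteq> {}"
    then obtain x where x: "x \<in> B c" "x \<in> B c'" by blast
    obtain i where i: "\<forall>l. x l \<noteq> c l \<longrightarrow> l = i" using Bprop[OF x(1)] by blast
    obtain i' where i': "\<forall>l. x l \<noteq> c' l \<longrightarrow> l = i'" using Bprop[OF x(2)] by blast
    let ?d = "\<lambda>l. c l + c' l"
    have dC: "?d \<in> C" using lc cc by (simp add: linear_code_def)
    have "?d \<noteq> (\<lambda>_. 0)"
    proof
      assume "?d = (\<lambda>_. 0)"
      hence "c l = c' l" for l using bit_eq_iff_add by metis
      thus False using cc(3) by auto
    qed
    hence "4 \<le> hweight {0..<N} ?d" using w dC by blast
    moreover have "hweight {0..<N} ?d \<le> card {i, i'}"
    proof -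
      have "{l\<in>{0..<N}. ?d l \<noteq> 0} \<subseteq> {i, i'}"
      proof
        fix l assume "l \<in> {l\<in>{0..<N}. ?d l \<noteq> 0}"
        hence "c l \<noteq> c' l" using bit_eq_iff_add by auto
        thus "l \<in> {i, i'}" using i i' by (cases "x l = c l") auto
      qed
      thus ?thesis unfolding hweight_def by (intro card_mono) auto
    qed
    moreover have "card {i, i'} \<le> 2" by (simp add: card_insert_if)
    ultimately show False by simp
  qed
  have "card (\<Union>(B ` C)) = (\<Sum>c\<in>C. card (B c))"
    using fC disj by (intro card_UN_disjoint) (auto simp: B_def)
  also have "\<dots> = card C * (N + 1)" using cardB by simp
  finally have eq: "card (\<Union>(B ` C)) = card C * (N + 1)" .
  have "card (\<Union>(B ` C)) \<le> card (words {0..<N} :: (nat \<Rightarrow> bit) set)"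
    using BW by (intro card_mono finite_words) auto
  thus ?thesis using eq cC card_words[OF fI] by simp
qed

section \<open>Extended Hamming codes\<close>

lemma hamming:
  assumes N: "N = 2 ^ j"
  shows "\<exists>k. k \<in> kset N \<and> N \<le> k + j + 1"
proof -
  define alpha where "alpha = (\<lambda>i k. if bit (i::nat) k then (1::bit) else 0)"
  define psi where "psi = (\<lambda>(a0::bit, a::nat \<Rightarrow> bit) i. if i < N then a0 + (\<Sum>k<j. a k * alpha i k) else 0)"
  define G where "G = psi ` (UNIV \<times> words {0..<j})"
  have fI: "finite {0..<N}" by simp
  have lcG: "linear_code {0..<N} G"
    unfolding linear_code_def
  proof (intro conjI ballI allI)
    show "finite {0..<N}" by simp
    show "G \<subseteq> words {0..<N}" by (auto simp: G_def psi_def words_def)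
    show "(\<lambda>_. 0) \<in> G" unfolding G_def
      by (rule image_eqI[of _ _ "(0, \<lambda>_. 0)"]) (auto simp: psi_def words_def)
    fix u v assume "u \<in> G" "v \<in> G"
    then obtain a0 a b0 b where u: "u = psi (a0, a)" "a \<in> words {0..<j}"
      and v: "v = psi (b0, b)" "b \<in> words {0..<j}" by (auto simp: G_def)
    have "(\<lambda>i. u i + v i) = psi (a0 + b0, \<lambda>k. a k + b k)"
      using u v by (auto simp: psi_def fun_eq_iff distrib_right sum.distrib algebra_simps)
    moreover have "(\<lambda>k. a k + b k) \<in> words {0..<j}" using u v by (auto simp: words_def)
    ultimately show "(\<lambda>i. u i + v i) \<in> G" by (auto simp: G_def)
  next
    fix c :: bit and v assume "v \<in> G"
    then obtain b0 b where v: "v = psi (b0, b)" "b \<in> words {0..<j}" by (auto simp: G_def)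
    have "(\<lambda>i. c * v i) = psi (c * b0, \<lambda>k. c * b k)"
      using v by (auto simp: psi_def fun_eq_iff distrib_left sum_distrib_left mult.assoc)
    moreover have "(\<lambda>k. c * b k) \<in> words {0..<j}" using v by (auto simp: words_def)
    ultimately show "(\<lambda>i. c * v i) \<in> G" by (auto simp: G_def)
  qed
  define H where "H = dual_code {0..<N} G"
  have lcH: "linear_code {0..<N} H" unfolding H_def by (rule dual_linear) simp
  have cGH: "card G * card H = 2 ^ N" using card_code_dual[OF lcG] by (simp add: H_def)
  have cG: "card G \<le> 2 ^ (j + 1)"
  proof -
    have "card G \<le> card ((UNIV::bit set) \<times> (words {0..<j} :: (nat \<Rightarrow> bit) set))"
      unfolding G_def by (rule card_image_le) (simp add: finite_words finite_UNIV_bit)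
    also have "\<dots> = 2 * 2 ^ j" by (simp add: card_cartesian_product card_UNIV_bit card_words)
    finally show ?thesis by simp
  qed
  have "card H dvd 2 ^ N" using cGH by (metis dvd_triv_right)
  then obtain k where k: "card H = 2 ^ k" "k \<le> N" using divides_primepow_nat[of 2] by auto
  have "2 ^ N \<le> (2::nat) ^ (j + 1) * 2 ^ k" using cGH cG k(1) by (metis mult_le_mono1)
  hence "(2::nat) ^ N \<le> 2 ^ (j + 1 + k)" by (simp add: power_add)
  hence Nle: "N \<le> k + j + 1" using power_le_imp_le_exp[of "2::nat" N "j + 1 + k"] by simp
  have wH: "4 \<le> hweight {0..<N} v" if vH: "v \<in> H" "v \<noteq> (\<lambda>_. 0)" for v
  proof -
    have vW: "v \<in> words {0..<N}" using vH by (simp add: H_def dual_code_def)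
    have orth: "(\<Sum>i\<in>{0..<N}. v i * g i) = 0" if "g \<in> G" for g
      using vH that by (simp add: H_def dual_code_def)
    have ones: "psi (1, \<lambda>_. 0) \<in> G" unfolding G_def by (rule imageI) (simp add: words_def)
    have "(\<Sum>i\<in>{0..<N}. v i) = (\<Sum>i\<in>{0..<N}. v i * psi (1, \<lambda>_. 0) i)"
      by (rule sum.cong) (auto simp: psi_def)
    also have "\<dots> = 0" using orth[OF ones] .
    finally have "(of_nat (hweight {0..<N} v) :: bit) = 0" using sum_bit_hweight[OF fI, of v] by simp
    hence ev: "even (hweight {0..<N} v)" by (simp add: bit_of_nat split: if_splits)
    have nz: "hweight {0..<N} v \<noteq> 0" using hweight_zero[OF vW fI] vH(2) by blast
    have n2: "hweight {0..<N} v \<noteq> 2"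
    proof
      assume "hweight {0..<N} v = 2"
      then obtain p q where pq: "{i\<in>{0..<N}. v i \<noteq> 0} = {p, q}" "p \<noteq> q"
        unfolding hweight_def card_2_iff by blast
      have pN: "p < N" "q < N" using pq(1) by auto
      obtain kk where kk: "kk < j" "bit p kk \<noteq> bit q kk" using bits_differ[of p j q] pN pq(2) N by auto
      define a where "a = (\<lambda>l. if l = kk then (1::bit) else 0)"
      have aW: "a \<in> words {0..<j}" using kk by (auto simp: a_def words_def)
      have ga: "psi (0, a) i = (if i < N then alpha i kk else 0)" for i
      proof -
        have "(\<Sum>k<j. a k * alpha i k) = (\<Sum>k<j. if k = kk then alpha i k else 0)"
          by (rule sum.cong) (auto simp: a_def)
        also have "\<dots> = alpha i kk" using kk by (simp add: sum.delta)
        finally show ?thesis by (simp add: psi_def)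
      qed
      have "psi (0, a) \<in> G" unfolding G_def using aW by auto
      hence "0 = (\<Sum>i\<in>{0..<N}. v i * psi (0, a) i)" using orth by simp
      also have "\<dots> = (\<Sum>i\<in>{p, q}. v i * psi (0, a) i)"
      proof (rule sum.mono_neutral_right)
        show "{p, q} \<subseteq> {0..<N}" using pN by auto
        show "\<forall>i\<in>{0..<N} - {p, q}. v i * psi (0, a) i = 0"
        proof
          fix i assume i: "i \<in> {0..<N} - {p, q}"
          hence "i \<notin> {i\<in>{0..<N}. v i \<noteq> 0}" using pq(1) by blast
          hence "v i = 0" using i by blast
          thus "v i * psi (0, a) i = 0" by simp
        qed
      qed simp
      also have "\<dots> = alpha p kk + alpha q kk"
      proof -
        have "v p = 1" "v q = 1" using pq(1) by auto
        thus ?thesis using pq(2) pN by (simp add: ga)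
      qed
      also have "\<dots> = 1" using kk(2) by (auto simp: alpha_def)
      finally show False by simp
    qed
    from ev obtain t where "hweight {0..<N} v = 2 * t" by (rule evenE)
    thus ?thesis using nz n2 by simp
  qed
  have "k \<in> kset N" unfolding kset_def using lcH k(1) wH by (auto simp: card_UNIV_bit)
  thus ?thesis using Nle by blast
qed

lemma kopt_lower:
  assumes "N = 2 ^ j"
  shows "N \<le> k_opt TYPE(bit) N 4 + j + 1"
  using hamming[OF assms] kset_Max_ge by fastforce

lemma kopt_upper:
  assumes "N = 2 ^ j"
  shows "2 ^ k_opt TYPE(bit) N 4 * (N + 1) \<le> (2::nat) ^ N"
  using hamming[OF assms] kset_Max_in sphere_packing by blast

lemma finite_UNIV_card:
  assumes q: "card (UNIV::'a set) = 2 ^ m"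
  shows "finite (UNIV::'a set)"
  using q by (metis card.infinite nat.simps(3) power_not_zero zero_neq_numeral)

lemma char2:
  assumes q: "card (UNIV::'a::field set) = 2 ^ m"
  shows "(2::'a) = 0"
proof -
  have fin: "finite (UNIV::'a set)" by (rule finite_UNIV_card[OF q])
  have "(\<Sum>x\<in>(UNIV::'a set). x + 1) = (\<Sum>x\<in>UNIV. x)"
    by (rule sum.reindex_bij_witness[of _ "\<lambda>x. x - 1" "\<lambda>x. x + 1"]) auto
  hence "(\<Sum>x\<in>(UNIV::'a set). x) + of_nat (card (UNIV::'a set)) = (\<Sum>x\<in>UNIV. x)"
    by (simp add: sum.distrib)
  hence "(of_nat (2 ^ m) :: 'a) = 0" using q by simp
  hence "(2::'a) ^ m = 0" by simp
  thus ?thesis by simp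
qed

lemma add_self_c2: "(2::'a::field) = 0 \<Longrightarrow> x + x = (0::'a)"
  by (metis mult_2 mult_zero_left)

lemma minus_c2: "(2::'a::field) = 0 \<Longrightarrow> - x = (x::'a)"
  using add_self_c2 by (metis add_eq_0_iff)

lemma diff_c2: "(2::'a::field) = 0 \<Longrightarrow> x - y = (x::'a) + y"
  using minus_c2 by (metis diff_conv_add_uminus)

lemma eq_iff_add_c2: "(2::'a::field) = 0 \<Longrightarrow> (x = y) \<longleftrightarrow> (x::'a) + y = 0"
  using add_self_c2 by (metis add_left_cancel)

lemma fermat:
  assumes q: "card (UNIV::'a::field set) = 2 ^ m"
  shows "(x::'a) ^ (2 ^ m) = x"
proof (cases "x = 0")
  case True
  have "(2::nat) ^ m \<noteq> 0" by simp
  thus ?thesis using True by simp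
next
  case False
  have fin: "finite (UNIV::'a set)" by (rule finite_UNIV_card[OF q])
  let ?U = "UNIV - {0::'a}"
  have "(\<Prod>y\<in>?U. x * y) = (\<Prod>y\<in>?U. y)"
    using False by (intro prod.reindex_bij_witness[of _ "\<lambda>y. y / x" "\<lambda>y. x * y"]) auto
  hence "x ^ card ?U * (\<Prod>y\<in>?U. y) = (\<Prod>y\<in>?U. y)"
    by (simp add: prod.distrib)
  moreover have "(\<Prod>y\<in>?U. y) \<noteq> 0" using fin by simp
  ultimately have "x ^ card ?U = 1" by simp
  moreover have "card ?U = 2 ^ m - 1" using q fin by (simp add: card_Diff_singleton)
  ultimately have "x ^ (2 ^ m - 1) = 1" by simp
  hence "x ^ (2 ^ m - 1) * x = x" by simp
  moreover have "2 ^ m - 1 + 1 = (2::nat) ^ m" by simp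
  ultimately show ?thesis by (metis power_add power_one_right)
qed

lemma frob2: "(2::'a::field) = 0 \<Longrightarrow> (x + y) ^ 2 = x ^ 2 + (y::'a) ^ 2"
  by (simp add: power2_sum)

lemma frob: "(2::'a::field) = 0 \<Longrightarrow> (x + y) ^ (2 ^ i) = x ^ (2 ^ i) + (y::'a) ^ (2 ^ i)"
proof (induction i)
  case 0 thus ?case by simp
next
  case (Suc i)
  have "(x + y) ^ (2 ^ Suc i) = ((x + y) ^ (2 ^ i)) ^ 2" by (simp add: power_mult[symmetric] mult.commute)
  also have "\<dots> = (x ^ (2 ^ i)) ^ 2 + (y ^ (2 ^ i)) ^ 2" using Suc by (simp add: frob2)
  also have "\<dots> = x ^ (2 ^ Suc i) + y ^ (2 ^ Suc i)" by (simp add: power_mult[symmetric] mult.commute)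
  finally show ?case .
qed

lemma frob_sum: "(2::'a::field) = 0 \<Longrightarrow> (\<Sum>a\<in>A. f a) ^ (2 ^ i) = (\<Sum>a\<in>A. (f a :: 'a) ^ (2 ^ i))"
proof (induction A rule: infinite_finite_induct)
  case (insert a A) thus ?case by (simp add: frob)
qed simp_all

section \<open>Traces\<close>

lemma trace_add: "(2::'a::field) = 0 \<Longrightarrow> trace2 k (x + y) = trace2 k x + trace2 k (y::'a)"
  by (simp add: trace2_def frob sum.distrib)

lemma trace_zero[simp]: "trace2 k (0::'a::field) = 0"
  by (simp add: trace2_def power_0_left)

lemma trace_Suc: "trace2 (Suc k) y = trace2 k y + y ^ (2 ^ k)"
  by (simp add: trace2_def)

lemma trace_sq: "(2::'a::field) = 0 \<Longrightarrow> (trace2 k (y::'a)) ^ 2 = trace2 k y + y ^ (2 ^ k) + y"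
proof -
  assume c2: "(2::'a) = 0"
  have "(trace2 k y) ^ 2 = (\<Sum>i<k. (y ^ (2 ^ i)) ^ 2)"
    using frob_sum[OF c2, of "\<lambda>i. y ^ (2 ^ i)" "{..<k}" 1] by (simp add: trace2_def)
  also have "\<dots> = (\<Sum>i<k. y ^ (2 ^ Suc i))" by (simp add: power_mult[symmetric] mult.commute)
  finally have A: "(trace2 k y) ^ 2 = (\<Sum>i<k. y ^ (2 ^ Suc i))" .
  have "trace2 (Suc k) y = y + (\<Sum>i<k. y ^ (2 ^ Suc i))"
    unfolding trace2_def by (subst sum.lessThan_Suc_shift) simp
  hence "trace2 k y + y ^ (2 ^ k) = y + (trace2 k y) ^ 2" using A trace_Suc by metis
  hence "(trace2 k y) ^ 2 = trace2 k y + y ^ (2 ^ k) - y" by (simp add: algebra_simps)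
  thus ?thesis using diff_c2[OF c2] by simp
qed

lemma idem01: "(t::'a::field) ^ 2 = t \<Longrightarrow> t = 0 \<or> t = 1"
  by (metis power2_eq_square mult_cancel_right1 mult_zero_left)

lemma trace_01:
  assumes c2: "(2::'a::field) = 0" and y: "(y::'a) ^ (2 ^ k) = y"
  shows "trace2 k y = 0 \<or> trace2 k y = 1"
proof -
  have "(trace2 k y) ^ 2 = trace2 k y" using trace_sq[OF c2, of k y] y add_self_c2[OF c2, of y]
    by (simp add: add.assoc)
  thus ?thesis by (rule idem01)
qed

lemma trace_shift:
  assumes c2: "(2::'a::field) = 0"
  shows "trace2 (a + b) (z::'a) = trace2 a z + trace2 b (z ^ (2 ^ a))"
proof (induction b)
  case 0 thus ?case by (simp add: trace2_def)
next
  case (Suc b)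
  have "(z ^ 2 ^ a) ^ 2 ^ b = z ^ 2 ^ (a + b)" by (simp add: power_mult[symmetric] power_add)
  thus ?case using Suc by (simp add: trace_Suc add.assoc)
qed

section \<open>Root counting\<close>

lemma card_pow_eq_poly:
  fixes q :: "'a::field poly"
  assumes n: "0 < n" and dq: "degree q < n"
  shows "card {x. x ^ n = poly q x} \<le> n"
proof -
  define p where "p = monom 1 n - q"
  have "coeff q n = 0" using dq by (simp add: coeff_eq_0)
  hence "coeff p n = 1" by (simp add: p_def coeff_monom)
  hence pnz: "p \<noteq> 0" by auto
  have dp: "degree p \<le> n" unfolding p_def using dq
    by (intro degree_diff_le degree_monom_le) simp
  have "{x. x ^ n = poly q x} = {x. poly p x = 0}" by (auto simp: p_def poly_monom)
  thus ?thesis using card_poly_roots_bound[OF pnz] dp by simp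
qed

lemma card_trace_zero_le:
  assumes c2: "(2::'a::field) = 0" and k: "k > 0"
  shows "card {y::'a. trace2 k y = 0} \<le> 2 ^ (k - 1)"
proof -
  obtain k' where k': "k = Suc k'" using k by (cases k) auto
  define q :: "'a poly" where "q = - (\<Sum>i<k'. monom 1 (2 ^ i))"
  have dq: "degree q < 2 ^ k'" unfolding q_def degree_minus
    by (rule degree_sum_less) (auto intro: le_less_trans[OF degree_monom_le])
  have "{y::'a. trace2 k y = 0} \<subseteq> {y. y ^ (2 ^ k') = poly q y}"
  proof
    fix y :: 'a assume "y \<in> {y. trace2 k y = 0}"
    hence "trace2 k' y + y ^ (2 ^ k') = 0" using trace_Suc[of k' y] k' by simp
    hence "y ^ (2 ^ k') = - trace2 k' y" by (simp add: eq_neg_iff_add_eq_0 add.commute)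
    also have "\<dots> = poly q y" by (simp add: q_def poly_sum poly_monom trace2_def)
    finally show "y \<in> {y. y ^ (2 ^ k') = poly q y}" by simp
  qed
  moreover have "finite {y. y ^ (2 ^ k') = poly q y}"
  proof -
    define p where "p = monom 1 (2 ^ k') - q"
    have "coeff q (2 ^ k') = 0" using dq by (simp add: coeff_eq_0)
    hence "coeff p (2 ^ k') = 1" by (simp add: p_def coeff_monom)
    hence "p \<noteq> 0" by auto
    moreover have "{y. y ^ (2 ^ k') = poly q y} = {x. poly p x = 0}" by (auto simp: p_def poly_monom)
    ultimately show ?thesis using poly_roots_finite by metis
  qed
  ultimately have "card {y::'a. trace2 k y = 0} \<le> card {y. y ^ (2 ^ k') = poly q y}" by (rule card_mono[rotated])
  also have "\<dots> \<le> 2 ^ k'" using card_pow_eq_poly[OF _ dq] by simp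
  finally show ?thesis using k' by simp
qed

lemma half_count:
  fixes t :: "'a::field \<Rightarrow> 'a"
  assumes c2: "(2::'a) = 0" and fS: "finite S"
    and t01: "\<forall>y\<in>S. t y = 0 \<or> t y = 1"
    and y0: "y0 \<in> S" "t y0 = 1"
    and cl: "\<forall>y\<in>S. y + y0 \<in> S"
    and tadd: "\<forall>y\<in>S. t (y + y0) = t y + 1"
  shows "2 * card {y\<in>S. t y = 0} = card S"
proof -
  let ?Z = "{y\<in>S. t y = 0}" and ?O = "{y\<in>S. t y = 1}"
  have inv: "y + y0 + y0 = y" for y by (simp add: add.assoc add_self_c2[OF c2])
  have one1: "(1::'a) + 1 = 0" using c2 by simp
  have "bij_betw (\<lambda>y. y + y0) ?Z ?O"
    by (rule bij_betw_byWitness[where f' = "\<lambda>y. y + y0"]) (auto simp: inv cl tadd one1 c2)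
  hence "card ?Z = card ?O" by (rule bij_betw_same_card)
  moreover have "card ?Z + card ?O = card S"
  proof -
    have "?Z \<union> ?O = S" using t01 by auto
    moreover have "?Z \<inter> ?O = {}" by auto
    ultimately show ?thesis using fS by (metis card_Un_disjoint finite_Un)
  qed
  ultimately show ?thesis by simp
qed

lemma trace_half:
  assumes q: "card (UNIV::'a::field set) = 2 ^ m" and m: "m > 0"
  shows "2 * card {y::'a. trace2 m y = 0} = 2 ^ m"
proof -
  have c2: "(2::'a) = 0" by (rule char2[OF q])
  have fin: "finite (UNIV::'a set)" by (rule finite_UNIV_card[OF q])
  have t01: "\<forall>y::'a. trace2 m y = 0 \<or> trace2 m y = 1" using trace_01[OF c2 fermat[OF q]] by blast
  have "card {y::'a. trace2 m y = 0} \<le> 2 ^ (m - 1)" by (rule card_trace_zero_le[OF c2 m])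
  also have "\<dots> < 2 ^ m" using m by simp
  finally have "{y::'a. trace2 m y = 0} \<noteq> UNIV" using q by auto
  then obtain y0 :: 'a where "trace2 m y0 \<noteq> 0" by auto
  hence y0: "trace2 m y0 = 1" using t01 by blast
  have "2 * card {y\<in>UNIV. trace2 m (y::'a) = 0} = card (UNIV::'a set)"
  proof (rule half_count[OF c2 fin])
    show "\<forall>y\<in>UNIV. trace2 m (y::'a) = 0 \<or> trace2 m y = 1" using t01 by blast
    show "y0 \<in> UNIV" "trace2 m y0 = 1" using y0 by auto
    show "\<forall>y\<in>UNIV. y + y0 \<in> UNIV" by simp
    show "\<forall>y\<in>UNIV. trace2 m ((y::'a) + y0) = trace2 m y + 1" using y0 by (simp add: trace_add[OF c2])
  qed
  thus ?thesis using q by simp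
qed

lemma trace_lin_count:
  assumes q: "card (UNIV::'a::field set) = 2 ^ m" and m: "m > 0" and u: "(u::'a) \<noteq> 0"
  shows "2 * card {b::'a. trace2 m (b * u) = 0} = 2 ^ m"
proof -
  have "bij_betw (\<lambda>b. b * u) {b::'a. trace2 m (b * u) = 0} {y. trace2 m y = 0}"
    by (rule bij_betw_byWitness[where f' = "\<lambda>y. y / u"]) (auto simp: u)
  hence "card {b::'a. trace2 m (b * u) = 0} = card {y::'a. trace2 m y = 0}" by (rule bij_betw_same_card)
  thus ?thesis using trace_half[OF q m] by simp
qed

lemma trace_nondeg:
  assumes q: "card (UNIV::'a::field set) = 2 ^ m" and m: "m > 0" and u: "(u::'a) \<noteq> 0"
  shows "\<exists>b. trace2 m (b * u) \<noteq> 0"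
proof (rule ccontr)
  assume "\<not> ?thesis"
  hence "{b::'a. trace2 m (b * u) = 0} = UNIV" by auto
  hence "2 * 2 ^ m = (2::nat) ^ m" using trace_lin_count[OF q m u] q by simp
  thus False by simp
qed

section \<open>Subfield and norm\<close>

definition subK :: "nat \<Rightarrow> 'a::field set" where "subK r = {y. y ^ (2 ^ r) = y}"
definition nrm :: "nat \<Rightarrow> 'a::field \<Rightarrow> 'a" where "nrm r x = x ^ (2 ^ r + 1)"
definition fib :: "nat \<Rightarrow> 'a::field \<Rightarrow> 'a set" where "fib r y = {x. nrm r x = y}"

lemma card_subK_le:
  assumes r: "r > 0"
  shows "card (subK r :: 'a::field set) \<le> 2 ^ r"
proof -
  have "subK r = {x::'a. x ^ (2 ^ r) = poly [:0, 1:] x}" by (simp add: subK_def)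
  moreover have "degree [:0, 1::'a:] < 2 ^ r"
  proof -
    have "(2::nat) ^ 1 \<le> 2 ^ r" using r by (intro power_increasing) auto
    thus ?thesis by simp
  qed
  ultimately show ?thesis using card_pow_eq_poly[of "2 ^ r" "[:0, 1::'a:]"] by simp
qed

lemma card_fib_le: "card (fib r (c::'a::field)) \<le> 2 ^ r + 1"
proof -
  have "fib r c = {x::'a. x ^ (2 ^ r + 1) = poly [:c:] x}" by (simp add: fib_def nrm_def)
  thus ?thesis using card_pow_eq_poly[of "2 ^ r + 1" "[:c:]"] by simp
qed

lemma nrm_in_K:
  assumes q: "card (UNIV::'a::field set) = 2 ^ m" and m: "m = 2 * r"
  shows "nrm r (x::'a) \<in> subK r"
proof -
  have "(x ^ (2 ^ r + 1)) ^ (2 ^ r) = x ^ (2 ^ r * 2 ^ r) * x ^ (2 ^ r)"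
    by (simp add: power_mult[symmetric] power_add algebra_simps)
  also have "2 ^ r * 2 ^ r = (2::nat) ^ m" using m by (simp add: power_add[symmetric] mult_2)
  also have "x ^ (2 ^ m) = x" by (rule fermat[OF q])
  finally show ?thesis by (simp add: subK_def nrm_def mult.commute)
qed

lemma nrm_zero_iff: "nrm r (x::'a::field) = 0 \<longleftrightarrow> x = 0"
  by (simp add: nrm_def)

lemma K_add: "(2::'a::field) = 0 \<Longrightarrow> y \<in> subK r \<Longrightarrow> z \<in> subK r \<Longrightarrow> (y::'a) + z \<in> subK r"
  by (simp add: subK_def frob)

lemma norm_count:
  assumes q: "card (UNIV::'a::field set) = 2 ^ m" and m: "m = 2 * r" and r: "r > 0"
  shows "card (subK r - {0::'a}) = 2 ^ r - 1 \<and> (\<forall>y\<in>subK r - {0::'a}. card (fib r y) = 2 ^ r + 1)"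
proof -
  have fin: "finite (UNIV::'a set)" by (rule finite_UNIV_card[OF q])
  let ?K = "subK r - {0::'a}"
  have fK: "finite ?K" using fin by (rule finite_subset[rotated]) simp
  have fF: "finite (fib r y)" for y :: 'a using fin by (rule finite_subset[rotated]) simp
  have "UNIV - {0::'a} = (\<Union>y\<in>?K. fib r y)"
    using nrm_in_K[OF q m] nrm_zero_iff by (auto simp: fib_def)
  hence "card (UNIV - {0::'a}) = (\<Sum>y\<in>?K. card (fib r y))"
    using fK fF by (simp add: card_UN_disjoint fib_def disjoint_iff)
  moreover have "card (UNIV - {0::'a}) = 2 ^ m - 1" using q fin by (simp add: card_Diff_singleton)
  ultimately have S: "(\<Sum>y\<in>?K. card (fib r y)) = 2 ^ m - 1" by simp
  have le1: "(\<Sum>y\<in>?K. card (fib r y)) \<le> (\<Sum>y\<in>?K. 2 ^ r + 1)" by (rule sum_mono) (rule card_fib_le)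
  have "card ?K \<le> 2 ^ r - 1"
  proof -
    have "(0::'a) \<in> subK r" by (simp add: subK_def)
    moreover have "finite (subK r :: 'a set)" using fin by (rule finite_subset[rotated]) simp
    ultimately have "card ?K = card (subK r :: 'a set) - 1" by (simp add: card_Diff_singleton)
    thus ?thesis using card_subK_le[OF r, where 'a='a] by simp
  qed
  moreover have fact: "(2::nat) ^ m - 1 = (2 ^ r - 1) * (2 ^ r + 1)"
  proof -
    have "(2::nat) ^ m = 2 ^ r * 2 ^ r" using m by (simp add: power_add[symmetric] mult_2)
    moreover have "(2::nat) ^ r \<ge> 1" by simp
    ultimately show ?thesis by (simp add: algebra_simps)
  qed
  moreover have "(2 ^ r - 1) * (2 ^ r + 1) \<le> card ?K * (2 ^ r + 1)" using le1 S fact by simp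
  ultimately have cK: "card ?K = 2 ^ r - 1" by (metis le_antisym mult_le_cancel2 add_gr_0 zero_less_one)
  have "\<forall>y\<in>?K. card (fib r y) = 2 ^ r + 1"
  proof (rule ccontr)
    assume "\<not> ?thesis"
    then obtain y where y: "y \<in> ?K" "card (fib r y) \<noteq> 2 ^ r + 1" by blast
    hence "card (fib r y) < 2 ^ r + 1" using card_fib_le[of r y] by simp
    hence "(\<Sum>y\<in>?K. card (fib r y)) < (\<Sum>y\<in>?K. 2 ^ r + 1)"
      using fK y(1) card_fib_le[of r] by (intro sum_strict_mono_ex1) auto
    thus False using S cK fact by simp
  qed
  thus ?thesis using cK by blast
qed

definition Qf :: "nat \<Rightarrow> 'a::field \<Rightarrow> 'a" where "Qf r x = trace2 r (nrm r x)"

lemma defining_set_Qf: "defining_set r = {x. Qf r x = 0}"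
  by (simp add: defining_set_def Qf_def nrm_def)

lemma card_subK:
  assumes q: "card (UNIV::'a::field set) = 2 ^ m" and m: "m = 2 * r" and r: "r > 0"
  shows "card (subK r :: 'a set) = 2 ^ r"
proof -
  have fin: "finite (UNIV::'a set)" by (rule finite_UNIV_card[OF q])
  have "(0::'a) \<in> subK r" by (simp add: subK_def)
  moreover have "finite (subK r :: 'a set)" using fin by (rule finite_subset[rotated]) simp
  ultimately have "card (subK r - {0::'a}) = card (subK r :: 'a set) - 1" by (simp add: card_Diff_singleton)
  moreover have "card (subK r :: 'a set) > 0" using \<open>finite (subK r :: 'a set)\<close> \<open>(0::'a) \<in> subK r\<close>
    by (auto simp: card_gt_0_iff)
  moreover have "(2::nat) ^ r > 0" by simp
  ultimately show ?thesis using norm_count[OF q m r] by linarith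
qed

lemma K_trace_half:
  assumes q: "card (UNIV::'a::field set) = 2 ^ m" and m: "m = 2 * r" and r: "r > 0"
  shows "2 * card {y\<in>subK r. trace2 r (y::'a) = 0} = 2 ^ r"
proof -
  have c2: "(2::'a) = 0" by (rule char2[OF q])
  have fin: "finite (UNIV::'a set)" by (rule finite_UNIV_card[OF q])
  have fK: "finite (subK r :: 'a set)" using fin by (rule finite_subset[rotated]) simp
  have t01: "\<forall>y\<in>subK r. trace2 r (y::'a) = 0 \<or> trace2 r y = 1"
    using trace_01[OF c2] by (auto simp: subK_def)
  have "card {y\<in>subK r. trace2 r (y::'a) = 0} \<le> card {y::'a. trace2 r y = 0}"
    using fin by (intro card_mono rev_finite_subset[OF fin]) auto
  also have "\<dots> \<le> 2 ^ (r - 1)" by (rule card_trace_zero_le[OF c2 r])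
  also have "\<dots> < 2 ^ r" using r by simp
  finally have "{y\<in>subK r. trace2 r (y::'a) = 0} \<noteq> subK r" using card_subK[OF q m r] by auto
  then obtain y0 :: 'a where y0K: "y0 \<in> subK r" and "trace2 r y0 \<noteq> 0" by auto
  hence y0: "trace2 r y0 = 1" using t01 by blast
  have "2 * card {y\<in>subK r. trace2 r (y::'a) = 0} = card (subK r :: 'a set)"
  proof (rule half_count[OF c2 fK t01 y0K y0])
    show "\<forall>y\<in>subK r. y + y0 \<in> subK r" using K_add[OF c2 _ y0K] by blast
    show "\<forall>y\<in>subK r. trace2 r (y + y0) = trace2 r y + 1" using y0 by (simp add: trace_add[OF c2])
  qed
  thus ?thesis using card_subK[OF q m r] by simp
qed

lemma card_D:
  assumes q: "card (UNIV::'a::field set) = 2 ^ m" and m: "m = 2 * r" and r: "r > 0"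
  shows "card (defining_set r :: 'a set) = 2 ^ (r - 1) * (2 ^ r - 1)"
proof -
  have fin: "finite (UNIV::'a set)" by (rule finite_UNIV_card[OF q])
  define K0 where "K0 = {y\<in>subK r - {0::'a}. trace2 r y = 0}"
  have fK0: "finite K0" using fin by (rule finite_subset[rotated]) simp
  have fF: "finite (fib r y)" for y :: 'a using fin by (rule finite_subset[rotated]) simp
  have cK0: "card K0 = 2 ^ (r - 1) - 1"
  proof -
    have "K0 = {y\<in>subK r. trace2 r (y::'a) = 0} - {0}" by (auto simp: K0_def)
    moreover have "(0::'a) \<in> {y\<in>subK r. trace2 r (y::'a) = 0}" by (simp add: subK_def)
    moreover have "card {y\<in>subK r. trace2 r (y::'a) = 0} = 2 ^ (r - 1)"
    proof -
      have "(2::nat) ^ r = 2 * 2 ^ (r - 1)" using r by (metis Suc_diff_1 power_Suc)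
      thus ?thesis using K_trace_half[OF q m r] by simp
    qed
    ultimately show ?thesis by (simp add: card_Diff_singleton)
  qed
  have Deq: "defining_set r = insert (0::'a) (\<Union>y\<in>K0. fib r y)"
  proof -
    have "x \<in> defining_set r \<longleftrightarrow> x \<in> insert 0 (\<Union>y\<in>K0. fib r y)" for x :: 'a
      using nrm_in_K[OF q m, of x] nrm_zero_iff[of r x]
      by (auto simp: defining_set_Qf Qf_def K0_def fib_def)
    thus ?thesis by blast
  qed
  have "card (\<Union>y\<in>K0. fib r y) = (\<Sum>y\<in>K0. card (fib r y))"
    using fK0 fF by (intro card_UN_disjoint) (auto simp: fib_def)
  also have "\<dots> = (\<Sum>y\<in>K0. 2 ^ r + 1)"
    using norm_count[OF q m r] by (intro sum.cong) (auto simp: K0_def)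
  finally have cU: "card (\<Union>y\<in>K0. fib r y) = (2 ^ (r - 1) - 1) * (2 ^ r + 1)" using cK0 by simp
  have "(0::'a) \<notin> (\<Union>y\<in>K0. fib r y)" by (auto simp: K0_def fib_def nrm_zero_iff)
  hence "card (defining_set r :: 'a set) = 1 + (2 ^ (r - 1) - 1) * (2 ^ r + 1)"
    using Deq cU fK0 fF by simp
  moreover have "(1::nat) + (2 ^ (r - 1) - 1) * (2 ^ r + 1) = 2 ^ (r - 1) * (2 ^ r - 1)"
  proof -
    obtain s :: nat where s: "s = 2 ^ (r - 1)" by simp
    have "(2::nat) ^ r = 2 * s" using r s by (metis Suc_diff_1 power_Suc)
    moreover have "s \<ge> 1" using s by simp
    moreover obtain t where t: "s = Suc t" using \<open>s \<ge> 1\<close> by (cases s) auto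
    ultimately have X: "1 + (s - 1) * (2 ^ r + 1) = s * (2 ^ r - 1)" by (simp add: algebra_simps)
    show ?thesis using X by (simp only: s)
  qed
  ultimately show ?thesis by simp
qed

lemma Q_add:
  assumes q: "card (UNIV::'a::field set) = 2 ^ m" and m: "m = 2 * r"
  shows "Qf r ((x::'a) + a) = Qf r x + Qf r a + trace2 m (x * a ^ (2 ^ r))"
proof -
  have c2: "(2::'a) = 0" by (rule char2[OF q])
  let ?z = "x * a ^ (2 ^ r)"
  have zz: "?z ^ (2 ^ r) = x ^ (2 ^ r) * a"
  proof -
    have e: "2 ^ r * 2 ^ r = (2::nat) ^ m" using m by (simp add: power_add[symmetric] mult_2)
    have "?z ^ (2 ^ r) = x ^ (2 ^ r) * (a ^ (2 ^ r)) ^ (2 ^ r)" by (simp only: power_mult_distrib)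
    also have "(a ^ (2 ^ r)) ^ (2 ^ r) = a ^ (2 ^ r * 2 ^ r)" by (simp only: power_mult)
    also have "\<dots> = a" unfolding e by (rule fermat[OF q])
    finally show ?thesis .
  qed
  have "nrm r (x + a) = (x + a) ^ (2 ^ r) * (x + a)" by (simp add: nrm_def)
  also have "\<dots> = (x ^ (2 ^ r) + a ^ (2 ^ r)) * (x + a)" by (simp add: frob[OF c2])
  also have "\<dots> = x ^ (2 ^ r) * x + a ^ (2 ^ r) * a + (?z + x ^ (2 ^ r) * a)"
    by (simp add: algebra_simps)
  also have "\<dots> = nrm r x + nrm r a + (?z + ?z ^ (2 ^ r))"
    by (simp only: zz nrm_def power_add power_one_right)
  finally have "Qf r (x + a) = Qf r x + Qf r a + (trace2 r ?z + trace2 r (?z ^ (2 ^ r)))"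
    by (simp add: Qf_def trace_add[OF c2])
  also have "trace2 r ?z + trace2 r (?z ^ (2 ^ r)) = trace2 m ?z"
    using trace_shift[OF c2, of r r ?z] m by (simp add: mult_2)
  finally show ?thesis .
qed

lemma Q_01:
  assumes q: "card (UNIV::'a::field set) = 2 ^ m" and m: "m = 2 * r"
  shows "Qf r (x::'a) = 0 \<or> Qf r x = 1"
  unfolding Qf_def using trace_01[OF char2[OF q]] nrm_in_K[OF q m, of x] by (simp add: subK_def)

lemma trace_01m:
  assumes q: "card (UNIV::'a::field set) = 2 ^ m"
  shows "trace2 m (x::'a) = 0 \<or> trace2 m x = 1"
  using trace_01[OF char2[OF q] fermat[OF q]] .

lemma four_count:
  fixes f g :: "'a::field \<Rightarrow> 'a"
  assumes c2: "(2::'a) = 0" and fin: "finite (UNIV::'a set)"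
    and f01: "\<forall>x. f x = 0 \<or> f x = 1" and g01: "\<forall>x. g x = 0 \<or> g x = 1"
  shows "2 * card {x. f x = 0 \<and> g x = 0} + card (UNIV::'a set) =
         card {x. f x = 0} + card {x. g x = 0} + card {x. f x + g x = 0}"
proof -
  let ?A = "{x. f x = 0 \<and> g x = 0}" and ?B = "{x. f x = 0 \<and> g x = 1}"
  let ?C = "{x. f x = 1 \<and> g x = 0}" and ?E = "{x. f x = 1 \<and> g x = 1}"
  have fs: "finite S" for S :: "'a set" using fin by (rule finite_subset[rotated]) simp
  have z10: "(1::'a) \<noteq> 0" by simp
  have one1: "(1::'a) + 1 = 0" using c2 by simp
  have e1: "{x. f x = 0} = ?A \<union> ?B" using g01 by auto
  have e2: "{x. g x = 0} = ?A \<union> ?C" using f01 by auto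
  have pt: "f x + g x = 0 \<longleftrightarrow> (f x = 0 \<and> g x = 0) \<or> (f x = 1 \<and> g x = 1)" for x
    using eq_iff_add_c2[OF c2, of "f x" "g x"] f01 g01 by metis
  have e3: "{x. f x + g x = 0} = ?A \<union> ?E" using pt by auto
  have e4: "(UNIV::'a set) = (?A \<union> ?B) \<union> (?C \<union> ?E)" using f01 g01 by auto
  have c1: "card {x. f x = 0} = card ?A + card ?B" unfolding e1 by (rule card_Un_disjoint[OF fs fs]) auto
  have c2': "card {x. g x = 0} = card ?A + card ?C" unfolding e2 by (rule card_Un_disjoint[OF fs fs]) auto
  have c3: "card {x. f x + g x = 0} = card ?A + card ?E" unfolding e3 by (rule card_Un_disjoint[OF fs fs]) auto
  have "card (UNIV::'a set) = card (?A \<union> ?B) + card (?C \<union> ?E)"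
    by (subst e4, rule card_Un_disjoint[OF fs fs]) auto
  also have "\<dots> = card ?A + card ?B + (card ?C + card ?E)"
    by (simp add: card_Un_disjoint[OF fs fs] disjoint_iff)
  finally show ?thesis using c1 c2' c3 by simp
qed

lemma weight_count:
  assumes q: "card (UNIV::'a::field set) = 2 ^ m" and m: "m = 2 * r" and r: "r > 0"
    and b: "(b::'a) \<noteq> 0" and s: "s = 2 ^ (r - 1)"
  shows "if Qf r (b ^ (2 ^ r)) = 0
         then card {x\<in>defining_set r. trace2 m (b * x) = 0} + s = s * s
         else card {x\<in>defining_set r. trace2 m (b * x) = 0} = s * s"
proof -
  let ?a = "b ^ (2 ^ r)"
  have c2: "(2::'a) = 0" by (rule char2[OF q])
  have fin: "finite (UNIV::'a set)" by (rule finite_UNIV_card[OF q])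
  have fs: "finite S" for S :: "'a set" using fin by (rule finite_subset[rotated]) simp
  have s2: "(2::nat) ^ r = 2 * s" using r s by (metis Suc_diff_1 power_Suc)
  have "(2::nat) ^ m = 2 ^ r * 2 ^ r" using m by (simp add: power_add[symmetric] mult_2)
  hence q4: "(2::nat) ^ m = 4 * (s * s)" using s2 by simp
  have m0: "m > 0" using m r by simp
  have nD: "card (defining_set r :: 'a set) + s = 2 * (s * s)"
    using card_D[OF q m r] s s2 by (simp add: algebra_simps)
  have aa: "?a ^ (2 ^ r) = b"
  proof -
    have e: "2 ^ r * 2 ^ r = (2::nat) ^ m" using m by (simp add: power_add[symmetric] mult_2)
    have "?a ^ (2 ^ r) = b ^ (2 ^ r * 2 ^ r)" by (simp only: power_mult)
    also have "\<dots> = b" unfolding e by (rule fermat[OF q])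
    finally show ?thesis .
  qed
  let ?f = "Qf r :: 'a \<Rightarrow> 'a" and ?g = "\<lambda>x::'a. trace2 m (b * x)"
  have f01: "\<forall>x. ?f x = 0 \<or> ?f x = 1" using Q_01[OF q m] by blast
  have g01: "\<forall>x. ?g x = 0 \<or> ?g x = 1" using trace_01m[OF q] by blast
  have four: "2 * card {x. ?f x = 0 \<and> ?g x = 0} + card (UNIV::'a set) =
         card {x. ?f x = 0} + card {x. ?g x = 0} + card {x. ?f x + ?g x = 0}"
    by (rule four_count[OF c2 fin f01 g01])
  have A: "{x. ?f x = 0 \<and> ?g x = 0} = {x\<in>defining_set r. trace2 m (b * x) = 0}"
    by (auto simp: defining_set_Qf)
  have P: "card {x. ?f x = 0} = card (defining_set r :: 'a set)" by (simp add: defining_set_Qf)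
  have H: "2 * card {x. ?g x = 0} = 2 ^ m"
    using trace_lin_count[OF q m0 b] by (simp add: mult.commute)
  have Meq: "{x. ?f x + ?g x = 0} = {x. Qf r (x + ?a) = Qf r ?a}"
  proof -
    have "Qf r (x + ?a) = (?f x + ?g x) + Qf r ?a" for x
      using Q_add[OF q m, of x ?a] aa by (simp add: algebra_simps)
    thus ?thesis by auto
  qed
  have "card {x. Qf r (x + ?a) = Qf r ?a} = card {y. Qf r y = Qf r ?a}"
    by (rule bij_betw_same_card[of "\<lambda>x. x + ?a"], rule bij_betw_byWitness[where f' = "\<lambda>y. y - ?a"]) auto
  hence M: "card {x. ?f x + ?g x = 0} = card {y. Qf r y = Qf r ?a}" using Meq by simp
  have compl: "card {y::'a. Qf r y = 1} + card (defining_set r :: 'a set) = 2 ^ m"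
  proof -
    have "{y::'a. Qf r y = 1} \<union> defining_set r = UNIV" using f01 by (auto simp: defining_set_Qf)
    moreover have "{y::'a. Qf r y = 1} \<inter> defining_set r = {}" by (auto simp: defining_set_Qf)
    ultimately show ?thesis using q by (metis card_Un_disjoint fs)
  qed
  show ?thesis
  proof (cases "Qf r ?a = 0")
    case True
    hence "card {x. ?f x + ?g x = 0} = card (defining_set r :: 'a set)" using M by (simp add: defining_set_Qf)
    thus ?thesis using four A P H q q4 nD True by simp
  next
    case False
    hence "Qf r ?a = 1" using f01 by blast
    hence "card {x. ?f x + ?g x = 0} = card {y::'a. Qf r y = 1}" using M by simp
    thus ?thesis using four A P H q q4 nD compl False by simp
  qed
qed

definition wordf :: "nat \<Rightarrow> 'a::field set \<Rightarrow> 'a \<Rightarrow> bit \<Rightarrow> 'a \<Rightarrow> bit" where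
  "wordf m D b c = (\<lambda>x. if x \<in> D then to_bit (trace2 m (b * x)) + c else 0)"

lemma code_wordf: "code_CD_bar m D = {wordf m D b c | b c. True}"
  by (simp add: code_CD_bar_def wordf_def)

lemma to_bit_0[simp]: "to_bit 0 = 0" by (simp add: to_bit_def)
lemma to_bit_1[simp]: "to_bit 1 = 1" by (simp add: to_bit_def)

lemma to_bit_add:
  assumes c2: "(2::'a::field) = 0" and t: "t = 0 \<or> t = 1" and u: "u = 0 \<or> u = 1"
  shows "to_bit ((t::'a) + u) = to_bit t + to_bit u"
  using t u c2 by (auto simp: to_bit_def)

context
  fixes r m :: nat
  assumes q: "card (UNIV::'a::field set) = 2 ^ m" and r3: "r \<ge> 3" and m: "m = 2 * r"
begin

private lemma c2: "(2::'a) = 0" by (rule char2[OF q])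
private lemma r0: "r > 0" using r3 by simp
private lemma m0: "m > 0" using r3 m by simp
private lemma fin: "finite (UNIV::'a set)" by (rule finite_UNIV_card[OF q])
private lemma fs: "finite (S::'a set)" using fin by (rule finite_subset[rotated]) simp

private lemma tr_lin: "to_bit (trace2 m ((b::'a) * x)) + to_bit (trace2 m (b' * x)) = to_bit (trace2 m ((b + b') * x))"
  using to_bit_add[OF c2 trace_01m[OF q] trace_01m[OF q]] trace_add[OF c2]
  by (simp add: distrib_right)

private lemma tr_lin2: "to_bit (trace2 m ((b::'a) * x)) + to_bit (trace2 m (b * y)) = to_bit (trace2 m (b * (x + y)))"
  using to_bit_add[OF c2 trace_01m[OF q] trace_01m[OF q]] trace_add[OF c2]
  by (simp add: distrib_left)

private lemma word_add: "(\<lambda>x. wordf m D b c x + wordf m D b' c' x) = wordf m D ((b::'a) + b') (c + c')"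
proof
  fix x show "wordf m D b c x + wordf m D b' c' x = wordf m D (b + b') (c + c') x"
    using tr_lin[of b x b'] by (simp add: wordf_def algebra_simps)
qed

lemma linear_C: "linear_code (defining_set r :: 'a set) (code_CD_bar m (defining_set r))"
  unfolding linear_code_def code_wordf
proof (intro conjI ballI allI)
  show "finite (defining_set r :: 'a set)" by (rule fs)
  show "{wordf m (defining_set r) b c |b c. True} \<subseteq> words (defining_set r :: 'a set)"
    by (auto simp: words_def wordf_def)
  show "(\<lambda>_. 0) \<in> {wordf m (defining_set r :: 'a set) b c |b c. True}"
    by (rule CollectI, rule exI[of _ 0], rule exI[of _ 0]) (simp add: wordf_def fun_eq_iff)
  fix u v assume "u \<in> {wordf m (defining_set r :: 'a set) b c |b c. True}" "v \<in> {wordf m (defining_set r :: 'a set) b c |b c. True}"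
  then obtain b c b' c' where "u = wordf m (defining_set r) b c" "v = wordf m (defining_set r) b' c'" by auto
  thus "(\<lambda>i. u i + v i) \<in> {wordf m (defining_set r :: 'a set) b c |b c. True}" using word_add by blast
next
  fix a :: bit and v assume "v \<in> {wordf m (defining_set r :: 'a set) b c |b c. True}"
  then obtain b c where v: "v = wordf m (defining_set r) b c" by auto
  show "(\<lambda>i. a * v i) \<in> {wordf m (defining_set r :: 'a set) b c |b c. True}"
  proof (cases "a = 0")
    case True
    hence "(\<lambda>i. a * v i) = wordf m (defining_set r :: 'a set) 0 0" by (simp add: wordf_def fun_eq_iff)
    thus ?thesis by blast
  next
    case False
    hence "a = 1" by simp
    thus ?thesis using v by auto
  qed
qed


abbreviation DD :: "'a set" where "DD \<equiv> defining_set r"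
definition ss :: nat where "ss = 2 ^ (r - 1)"

definition Acnt :: "'a \<Rightarrow> nat" where "Acnt b = card {x\<in>DD. trace2 m (b * x) = 0}"

private lemma s2: "(2::nat) ^ r = 2 * ss" unfolding ss_def using r0 by (metis Suc_diff_1 power_Suc)
private lemma s4: "ss \<ge> 4"
proof -
  have "(2::nat) ^ 2 \<le> 2 ^ (r - 1)" using r3 by (intro power_increasing) auto
  thus ?thesis by (simp add: ss_def)
qed
private lemma cardD: "card DD + ss = 2 * (ss * ss)"
  using card_D[OF q m r0] s2 unfolding ss_def[symmetric] by (simp add: algebra_simps)
private lemma pow_pow: "((a::'a) ^ (2 ^ r)) ^ (2 ^ r) = a"
proof -
  have e: "2 ^ r * 2 ^ r = (2::nat) ^ m" using m by (simp add: power_add[symmetric] mult_2)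
  have "(a ^ (2 ^ r)) ^ (2 ^ r) = a ^ (2 ^ r * 2 ^ r)" by (simp only: power_mult)
  also have "\<dots> = a" unfolding e by (rule fermat[OF q])
  finally show ?thesis .
qed

private lemma Acnt_cases:
  assumes b: "b \<noteq> 0"
  shows "if Qf r (b ^ (2 ^ r)) = 0 then Acnt b + ss = ss * ss else Acnt b = ss * ss"
  using weight_count[OF q m r0 b ss_def] by (simp add: Acnt_def)

private lemma Acnt0: "Acnt 0 = card DD" by (simp add: Acnt_def)

private lemma Acnt_le: "Acnt b \<le> card DD" unfolding Acnt_def by (intro card_mono fs) auto

private lemma hw_word: "hweight DD (wordf m DD b c) = (if c = 0 then card DD - Acnt b else Acnt b)"
proof (cases "c = 0")
  case True
  have "{x\<in>DD. wordf m DD b c x \<noteq> 0} = DD - {x\<in>DD. trace2 m (b * x) = 0}"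
    using True by (auto simp: wordf_def to_bit_def)
  hence "hweight DD (wordf m DD b c) = card DD - Acnt b"
    unfolding hweight_def Acnt_def by (simp add: card_Diff_subset fs)
  thus ?thesis using True by simp
next
  case False
  hence c1: "c = 1" by simp
  have "{x\<in>DD. wordf m DD b c x \<noteq> 0} = {x\<in>DD. trace2 m (b * x) = 0}"
    using c1 by (auto simp: wordf_def to_bit_def)
  thus ?thesis using False unfolding hweight_def Acnt_def by simp
qed

private lemma hw_low:
  assumes "b \<noteq> 0 \<or> c \<noteq> 0"
  shows "ss * ss - ss \<le> hweight DD (wordf m DD b c)"
proof (cases "b = 0")
  case True
  hence "c = 1" using assms by simp
  thus ?thesis using True cardD by (simp add: hw_word Acnt0)
next
  case False
  have A: "Acnt b + ss = ss * ss \<or> Acnt b = ss * ss" using Acnt_cases[OF False] by metis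
  show ?thesis
  proof (cases "c = 0")
    case True
    hence "hweight DD (wordf m DD b c) = card DD - Acnt b" by (simp add: hw_word)
    thus ?thesis using A cardD by linarith
  next
    case False
    thus ?thesis using A by (auto simp: hw_word)
  qed
qed

private lemma d_pos: "ss * ss - ss > 0"
proof -
  have "ss * 1 < ss * ss" using s4 by (intro mult_strict_left_mono) auto
  thus ?thesis by simp
qed

private lemma word_words: "wordf m DD b c \<in> words DD" by (auto simp: wordf_def words_def)

private lemma word_nz:
  assumes "b \<noteq> 0 \<or> c \<noteq> 0"
  shows "wordf m DD b c \<noteq> (\<lambda>_. 0)"
proof
  assume "wordf m DD b c = (\<lambda>_. 0)"
  hence "hweight DD (wordf m DD b c) = 0" by (simp add: hweight_def)
  thus False using hw_low[OF assms] d_pos by simp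
qed

private lemma word_inj:
  assumes "wordf m DD b c = wordf m DD b' c'"
  shows "b = b' \<and> c = c'"
proof -
  have "wordf m DD (b + b') (c + c') = (\<lambda>x. wordf m DD b c x + wordf m DD b' c' x)"
    using word_add by metis
  also have "\<dots> = (\<lambda>_. 0)" using assms by simp
  finally have "\<not> (b + b' \<noteq> 0 \<or> c + c' \<noteq> 0)" using word_nz by metis
  thus ?thesis using eq_iff_add_c2[OF c2] bit_eq_iff_add by metis
qed

lemma card_C: "card (code_CD_bar m DD) = 2 ^ (m + 1)"
proof -
  have "code_CD_bar m DD = (\<lambda>(b, c). wordf m DD b c) ` (UNIV \<times> UNIV)"
    by (auto simp: code_wordf)
  moreover have "inj_on (\<lambda>(b, c). wordf m DD b c) (UNIV \<times> UNIV)"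
    by (rule inj_onI) (auto dest: word_inj)
  ultimately have "card (code_CD_bar m DD) = card ((UNIV::'a set) \<times> (UNIV::bit set))"
    by (simp add: card_image)
  also have "\<dots> = 2 ^ m * 2" by (simp only: card_cartesian_product q card_UNIV_bit)
  finally show ?thesis by simp
qed

private lemma D_nonzero: "\<exists>a\<in>DD. a \<noteq> 0"
proof (rule ccontr)
  assume "\<not> ?thesis"
  hence "DD \<subseteq> {0}" by auto
  hence "card DD \<le> card {0::'a}" by (intro card_mono) auto
  hence "card DD \<le> 1" by simp
  moreover have "4 * ss \<le> ss * ss" using s4 by (intro mult_le_mono1)
  ultimately show False using cardD s4 by linarith
qed

private lemma min_word:
  assumes a: "a \<in> DD" "a \<noteq> 0"
  shows "hweight DD (wordf m DD (a ^ (2 ^ r)) 1) = ss * ss - ss" and "a ^ (2 ^ r) \<noteq> 0"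
proof -
  show bnz: "a ^ (2 ^ r) \<noteq> 0" using a by simp
  have "Qf r a = 0" using a by (simp add: defining_set_Qf)
  hence "Acnt (a ^ (2 ^ r)) + ss = ss * ss" using Acnt_cases[OF bnz] pow_pow by simp
  thus "hweight DD (wordf m DD (a ^ (2 ^ r)) 1) = ss * ss - ss" by (simp add: hw_word)
qed

lemma min_dist_C: "min_dist DD (code_CD_bar m DD) = ss * ss - ss"
proof -
  obtain a where a: "a \<in> DD" "a \<noteq> 0" using D_nonzero by blast
  show ?thesis
  proof (rule min_dist_eq[OF fs])
    show "\<forall>v\<in>code_CD_bar m DD. v \<noteq> (\<lambda>_. 0) \<longrightarrow> ss * ss - ss \<le> hweight DD v"
    proof (intro ballI impI)
      fix v assume "v \<in> code_CD_bar m DD" "v \<noteq> (\<lambda>_. 0)"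
      then obtain b c where v: "v = wordf m DD b c" "wordf m DD b c \<noteq> (\<lambda>_. 0)" by (auto simp: code_wordf)
      have "wordf m DD 0 0 = (\<lambda>_. 0)" by (simp add: wordf_def fun_eq_iff)
      hence "b \<noteq> 0 \<or> c \<noteq> 0" using v(2) by auto
      thus "ss * ss - ss \<le> hweight DD v" using hw_low v(1) by simp
    qed
    show "wordf m DD (a ^ (2 ^ r)) 1 \<in> code_CD_bar m DD" by (auto simp: code_wordf)
    show "wordf m DD (a ^ (2 ^ r)) 1 \<noteq> (\<lambda>_. 0)" using word_nz by simp
    show "hweight DD (wordf m DD (a ^ (2 ^ r)) 1) = ss * ss - ss" by (rule min_word(1)[OF a])
  qed
qed


private lemma zero_D: "(0::'a) \<in> DD" by (simp add: defining_set_Qf Qf_def nrm_def)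

private lemma cover:
  assumes x: "x \<in> DD" "x \<noteq> 0"
  shows "\<exists>z\<in>DD. z \<noteq> 0 \<and> z \<noteq> x \<and> trace2 m (z * x ^ (2 ^ r)) = 0 \<and>
           trace2 m (x * z ^ (2 ^ r)) = 0 \<and> x + z \<in> DD"
proof -
  let ?b = "x ^ (2 ^ r)"
  have bnz: "?b \<noteq> 0" using x by simp
  have "Acnt ?b + ss = ss * ss \<or> Acnt ?b = ss * ss" using Acnt_cases[OF bnz] by metis
  moreover have "4 * ss \<le> ss * ss" using s4 by (intro mult_le_mono1)
  ultimately have A3: "Acnt ?b > 2" using s4 by linarith
  let ?Z = "{z\<in>DD. trace2 m (?b * z) = 0}"
  have "card (?Z - {0, x}) \<ge> card ?Z - card {0, x}" by (rule diff_card_le_card_Diff) simp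
  moreover have "card {0, x} \<le> 2" by (simp add: card_insert_if)
  ultimately have "card (?Z - {0, x}) > 0" using A3 unfolding Acnt_def by linarith
  hence "?Z - {0, x} \<noteq> {}" by (metis card.empty less_irrefl)
  then obtain z where "z \<in> ?Z - {0, x}" by blast
  hence z: "z \<in> ?Z" "z \<noteq> 0" "z \<noteq> x" by auto
  have t1: "trace2 m (z * x ^ (2 ^ r)) = 0" using z(1) by (simp add: mult.commute)
  have Qz: "Qf r z = 0" "Qf r x = 0" using z(1) x(1) by (auto simp: defining_set_Qf)
  have "Qf r (z + x) = Qf r z + Qf r x + trace2 m (z * x ^ (2 ^ r))" by (rule Q_add[OF q m])
  moreover have "Qf r (x + z) = Qf r x + Qf r z + trace2 m (x * z ^ (2 ^ r))" by (rule Q_add[OF q m])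
  ultimately have t2: "trace2 m (x * z ^ (2 ^ r)) = 0" using t1 by (simp add: add.commute)
  have "Qf r (x + z) = 0" using Q_add[OF q m, of x z] Qz t2 by simp
  hence "x + z \<in> DD" by (simp add: defining_set_Qf)
  thus ?thesis using z t1 t2 by auto
qed

definition ind :: "'a set \<Rightarrow> 'a \<Rightarrow> bit" where "ind S = (\<lambda>x. if x \<in> S then 1 else 0)"

private lemma four_word:
  assumes y: "y \<in> DD" "y \<noteq> 0" and z: "z \<in> DD" "z \<noteq> 0" "z \<noteq> y" "y + z \<in> DD"
  shows "ind {0, y, z, y + z} \<in> dual_code DD (code_CD_bar m DD)"
    and "hweight DD (ind {0, y, z, y + z}) = 4"
proof -
  let ?S = "{0, y, z, y + z}"
  have yz0: "y + z \<noteq> 0" using z(3) eq_iff_add_c2[OF c2, of y z] by auto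
  have yzy: "y + z \<noteq> y" using z(2) by simp
  have yzz: "y + z \<noteq> z" using y(2) by simp
  have SD: "?S \<subseteq> DD" using y z zero_D by auto
  show "hweight DD (ind ?S) = 4"
  proof -
    have "{x\<in>DD. ind ?S x \<noteq> 0} = ?S" using SD by (auto simp: ind_def)
    thus ?thesis unfolding hweight_def using y z yz0 yzy yzz by (simp add: card_insert_if)
  qed
  have "(\<Sum>x\<in>DD. ind ?S x * c x) = 0" if c: "c \<in> code_CD_bar m DD" for c
  proof -
    obtain b c0 where cw: "c = wordf m DD b c0" using c by (auto simp: code_wordf)
    have "(\<Sum>x\<in>DD. ind ?S x * c x) = (\<Sum>x\<in>?S. ind ?S x * c x)"
      using SD by (intro sum.mono_neutral_right fs) (auto simp: ind_def)
    also have "\<dots> = (\<Sum>x\<in>?S. c x)" by (rule sum.cong) (auto simp: ind_def)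
    also have "\<dots> = c 0 + (c y + (c z + c (y + z)))"
      using y z yz0 yzy yzz by (simp add: insert_commute)
    also have "\<dots> = 0"
    proof -
      have e0: "c 0 = c0" using zero_D by (simp add: cw wordf_def)
      have ey: "c y = to_bit (trace2 m (b * y)) + c0" using y by (simp add: cw wordf_def)
      have ez: "c z = to_bit (trace2 m (b * z)) + c0" using z by (simp add: cw wordf_def)
      have eyz: "c (y + z) = (to_bit (trace2 m (b * y)) + to_bit (trace2 m (b * z))) + c0"
        using z(4) tr_lin2[of b y z] by (simp add: cw wordf_def)
      show ?thesis unfolding e0 ey ez eyz
        by (cases "to_bit (trace2 m (b * y))"; cases "to_bit (trace2 m (b * z))"; cases c0) simp_all
    qed
    finally show ?thesis .
  qed
  moreover have "ind ?S \<in> words DD" using SD by (auto simp: ind_def words_def)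
  ultimately show "ind ?S \<in> dual_code DD (code_CD_bar m DD)" by (simp add: dual_code_def)
qed


private lemma dual_low:
  assumes v: "v \<in> dual_code DD (code_CD_bar m DD)" "v \<noteq> (\<lambda>_. 0)"
  shows "4 \<le> hweight DD v"
proof -
  have vW: "v \<in> words DD" using v by (simp add: dual_code_def)
  have orth: "(\<Sum>x\<in>DD. v x * wordf m DD b c x) = 0" for b c
    using v(1) by (auto simp: dual_code_def code_wordf)
  have "(\<Sum>x\<in>DD. v x) = (\<Sum>x\<in>DD. v x * wordf m DD 0 1 x)"
    by (rule sum.cong) (auto simp: wordf_def)
  also have "\<dots> = 0" by (rule orth)
  finally have "(of_nat (hweight DD v) :: bit) = 0" using sum_bit_hweight[OF fs, of v] by simp
  hence ev: "even (hweight DD v)" by (simp add: bit_of_nat split: if_splits)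
  have nz: "hweight DD v \<noteq> 0" using hweight_zero[OF vW fs] v(2) by blast
  have n2: "hweight DD v \<noteq> 2"
  proof
    assume "hweight DD v = 2"
    then obtain p p' where pq: "{i\<in>DD. v i \<noteq> 0} = {p, p'}" "p \<noteq> p'"
      unfolding hweight_def card_2_iff by blast
    have pD: "p \<in> DD" "p' \<in> DD" "v p = 1" "v p' = 1" using pq(1) by auto
    have "p + p' \<noteq> 0" using pq(2) eq_iff_add_c2[OF c2, of p p'] by auto
    then obtain b0 where "trace2 m (b0 * (p + p')) \<noteq> 0" using trace_nondeg[OF q m0] by blast
    hence t1: "trace2 m (b0 * (p + p')) = 1" using trace_01m[OF q] by blast
    have "0 = (\<Sum>x\<in>DD. v x * wordf m DD b0 0 x)" using orth by simp
    also have "\<dots> = (\<Sum>x\<in>{p, p'}. v x * wordf m DD b0 0 x)"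
    proof (rule sum.mono_neutral_right[OF fs])
      show "{p, p'} \<subseteq> DD" using pD by auto
      show "\<forall>i\<in>DD - {p, p'}. v i * wordf m DD b0 0 i = 0"
      proof
        fix i assume i: "i \<in> DD - {p, p'}"
        hence "i \<notin> {i\<in>DD. v i \<noteq> 0}" using pq(1) by blast
        hence "v i = 0" using i by blast
        thus "v i * wordf m DD b0 0 i = 0" by simp
      qed
    qed
    also have "\<dots> = wordf m DD b0 0 p + wordf m DD b0 0 p'" using pq(2) pD by simp
    also have "\<dots> = to_bit (trace2 m (b0 * (p + p')))"
      using pD tr_lin2[of b0 p p'] by (simp add: wordf_def)
    also have "\<dots> = 1" using t1 by simp
    finally show False by simp
  qed
  from ev obtain t where "hweight DD v = 2 * t" by (rule evenE)
  thus ?thesis using nz n2 by simp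
qed

private lemma dual_cov:
  assumes x: "x \<in> DD"
  shows "\<exists>u\<in>dual_code DD (code_CD_bar m DD). u x = 1 \<and> hweight DD u = 4"
proof -
  have main: "\<exists>u\<in>dual_code DD (code_CD_bar m DD). u 0 = 1 \<and> u y = 1 \<and> hweight DD u = 4"
    if y: "y \<in> DD" "y \<noteq> 0" for y
  proof -
    obtain z where z: "z \<in> DD" "z \<noteq> 0" "z \<noteq> y" "y + z \<in> DD" using cover[OF y] by blast
    show ?thesis using four_word[OF y z] by (intro bexI[of _ "ind {0, y, z, y + z}"]) (auto simp: ind_def)
  qed
  show ?thesis
  proof (cases "x = 0")
    case True
    obtain y where "y \<in> DD" "y \<noteq> 0" using D_nonzero by blast
    thus ?thesis using main True by blast
  next
    case False
    thus ?thesis using main x by blast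
  qed
qed

lemma locality_C: "locality DD (code_CD_bar m DD) = 3"
proof -
  have "locality DD (code_CD_bar m DD) = 4 - 1"
    by (rule locality_eq[OF linear_C]) (use zero_D dual_low dual_cov in auto)
  thus ?thesis by simp
qed

lemma min_dist_dual: "min_dist DD (dual_code DD (code_CD_bar m DD)) = 4"
proof -
  obtain y where y: "y \<in> DD" "y \<noteq> 0" using D_nonzero by blast
  obtain z where z: "z \<in> DD" "z \<noteq> 0" "z \<noteq> y" "y + z \<in> DD" using cover[OF y] by blast
  show ?thesis
  proof (rule min_dist_eq[OF fs])
    show "\<forall>v\<in>dual_code DD (code_CD_bar m DD). v \<noteq> (\<lambda>_. 0) \<longrightarrow> 4 \<le> hweight DD v"
      using dual_low by blast
    show "ind {0, y, z, y + z} \<in> dual_code DD (code_CD_bar m DD)" by (rule four_word[OF y z])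
    show "ind {0, y, z, y + z} \<noteq> (\<lambda>_. 0)" by (auto simp: ind_def fun_eq_iff)
    show "hweight DD (ind {0, y, z, y + z}) = 4" by (rule four_word[OF y z])
  qed
qed

private lemma ss_ge_r: "r \<le> ss"
proof -
  have h: "r - 1 < 2 ^ (r - 1)" by (rule less_exp)
  have "r \<le> 2 ^ (r - 1)" using h r0 by linarith
  thus ?thesis unfolding ss_def .
qed

lemma n_eq: "card DD = ss * (2 * ss - 1)"
  using cardD by (simp add: algebra_simps)

lemma card_dual: "card (dual_code DD (code_CD_bar m DD)) = 2 ^ (card DD - m - 1)"
proof -
  have le: "m + 1 \<le> card DD"
  proof -
    have "4 * ss \<le> ss * ss" using s4 by (intro mult_le_mono1)
    thus ?thesis using cardD ss_ge_r m s4 by linarith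
  qed
  have "card (code_CD_bar m DD) * card (dual_code DD (code_CD_bar m DD)) = 2 ^ card DD"
    by (rule card_code_dual[OF linear_C])
  moreover have e: "m + 1 + (card DD - m - 1) = card DD" using le by simp
  moreover have "(2::nat) ^ card DD = 2 ^ (m + 1) * 2 ^ (card DD - m - 1)" by (metis e power_add)
  ultimately have "2 ^ (m + 1) * card (dual_code DD (code_CD_bar m DD)) = 2 ^ (m + 1) * 2 ^ (card DD - m - 1)"
    using card_C by simp
  thus ?thesis by simp
qed

private lemma C_low: "\<forall>v\<in>code_CD_bar m DD. v \<noteq> (\<lambda>_. 0) \<longrightarrow> ss * ss - ss \<le> hweight DD v"
proof (intro ballI impI)
  fix v assume "v \<in> code_CD_bar m DD" "v \<noteq> (\<lambda>_. 0)"
  then obtain b c where v: "v = wordf m DD b c" "wordf m DD b c \<noteq> (\<lambda>_. 0)" by (auto simp: code_wordf)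
  have "wordf m DD 0 0 = (\<lambda>_. 0)" by (simp add: wordf_def fun_eq_iff)
  hence "b \<noteq> 0 \<or> c \<noteq> 0" using v(2) by auto
  thus "ss * ss - ss \<le> hweight DD v" using hw_low v(1) by simp
qed

private lemma C_cov:
  assumes x: "x \<in> DD"
  shows "\<exists>u\<in>code_CD_bar m DD. u x = 1 \<and> hweight DD u = ss * ss - ss"
proof (cases "x = 0")
  case True
  obtain a where a: "a \<in> DD" "a \<noteq> 0" using D_nonzero by blast
  have "wordf m DD (a ^ (2 ^ r)) 1 x = 1" using True zero_D by (simp add: wordf_def)
  moreover have "wordf m DD (a ^ (2 ^ r)) 1 \<in> code_CD_bar m DD" by (auto simp: code_wordf)
  ultimately show ?thesis using min_word(1)[OF a] by blast
next
  case False
  obtain z where z: "z \<in> DD" "z \<noteq> 0" "trace2 m (x * z ^ (2 ^ r)) = 0" using cover[OF x False] by blast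
  have "wordf m DD (z ^ (2 ^ r)) 1 x = 1" using x z(3) by (simp add: wordf_def mult.commute)
  moreover have "wordf m DD (z ^ (2 ^ r)) 1 \<in> code_CD_bar m DD" by (auto simp: code_wordf)
  ultimately show ?thesis using min_word(1)[OF z(1,2)] by blast
qed

lemma locality_dual: "locality DD (dual_code DD (code_CD_bar m DD)) = ss * ss - ss - 1"
proof (rule locality_eq[OF dual_linear[OF fs]])
  show "DD \<noteq> {}" using zero_D by auto
  show "\<forall>u\<in>dual_code DD (dual_code DD (code_CD_bar m DD)). u \<noteq> (\<lambda>_. 0) \<longrightarrow> ss * ss - ss \<le> hweight DD u"
    using C_low double_dual[OF linear_C] by simp
  show "\<forall>i\<in>DD. \<exists>u\<in>dual_code DD (dual_code DD (code_CD_bar m DD)). u i = 1 \<and> hweight DD u = ss * ss - ss"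
    using C_cov double_dual[OF linear_C] by simp
qed


lemma CM_value: "CM_bound TYPE(bit) (card DD) 4 (ss * ss - ss - 1) = card DD - m"
proof -
  define X where "X = ss * ss"
  define L where "L = ss * ss - ss - 1"
  define f where "f = (\<lambda>t. L * t + k_opt TYPE(bit) (card DD - t * (L + 1)) 4)"
  have X4: "4 * ss \<le> X" unfolding X_def using s4 by (intro mult_le_mono1)
  have nX: "card DD + ss = 2 * X" using cardD by (simp add: X_def)
  have L1: "L + 1 + ss = X" using X4 s4 unfolding L_def X_def by linarith
  have XP: "X = 2 ^ (2 * r - 2)"
  proof -
    have "X = 2 ^ (r - 1) * 2 ^ (r - 1)" by (simp add: X_def ss_def)
    also have "\<dots> = 2 ^ (r - 1 + (r - 1))" by (simp add: power_add)
    also have "r - 1 + (r - 1) = 2 * r - 2" by simp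
    finally show ?thesis .
  qed
  have ssP: "ss = 2 ^ (r - 1)" by (simp add: ss_def)
  have e1: "card DD - 1 * (L + 1) = X" using nX L1 by simp
  define K1 where "K1 = k_opt TYPE(bit) X 4"
  have K1lo: "X \<le> K1 + (2 * r - 2) + 1" unfolding K1_def by (rule kopt_lower[OF XP])
  have K1up: "2 ^ K1 * (X + 1) \<le> (2::nat) ^ X" unfolding K1_def by (rule kopt_upper[OF XP])
  have P: "(2::nat) ^ (K1 + (2 * r - 2)) < 2 ^ X"
  proof -
    have "(2::nat) ^ (K1 + (2 * r - 2)) = 2 ^ K1 * X" by (simp add: XP power_add)
    also have "\<dots> < 2 ^ K1 * (X + 1)" by simp
    finally show ?thesis using K1up by linarith
  qed
  have K1hi: "K1 + (2 * r - 2) < X" using power_less_imp_less_exp[of "2::nat" "K1 + (2 * r - 2)" X] P by linarith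
  have f1': "f 1 = L + K1" unfolding f_def K1_def using e1 by simp
  have f1: "f 1 = card DD - m" using f1' K1lo K1hi nX L1 m r3 X4 by linarith
  have e2: "card DD - 2 * (L + 1) = ss" using nX L1 by simp
  have K2lo: "ss \<le> k_opt TYPE(bit) ss 4 + (r - 1) + 1" by (rule kopt_lower[OF ssP])
  have f2': "f 2 = L * 2 + k_opt TYPE(bit) ss 4" unfolding f_def using e2 by simp
  have f2: "f 1 \<le> f 2" using f1' f2' K1lo K1hi K2lo nX L1 m r3 X4 by linarith
  have f3: "f 1 \<le> f t" if t: "t \<ge> 3" for t
  proof -
    have "L * 3 \<le> L * t" using t by simp
    moreover have "L * t \<le> f t" by (simp add: f_def)
    moreover have "f 1 + ss \<le> L * 3"
    proof -
      have "X * 3 = X + 2 * X" by simp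
      thus ?thesis using f1 nX L1 X4 m r3 s4 by (simp add: algebra_simps)
    qed
    ultimately show ?thesis by linarith
  qed
  have "CM_bound TYPE(bit) (card DD) 4 (ss * ss - ss - 1) = Inf (f ` {t. t \<ge> 1})"
    unfolding CM_bound_def f_def L_def by simp
  also have "\<dots> = f 1"
  proof (rule cInf_eq_minimum)
    show "f 1 \<in> f ` {t. t \<ge> 1}" by simp
    fix y assume "y \<in> f ` {t. t \<ge> 1}"
    then obtain t where t: "t \<ge> 1" "y = f t" by auto
    show "f 1 \<le> y"
    proof (cases "t = 1")
      case True thus ?thesis using t by simp
    next
      case False
      show ?thesis
      proof (cases "t = 2")
        case True thus ?thesis using t f2 by simp
      next
        case False
        hence "t \<ge> 3" using \<open>t \<noteq> 1\<close> t(1) by simp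
        thus ?thesis using f3 t by simp
      qed
    qed
  qed
  finally show ?thesis using f1 by simp
qed


lemma n_gt_m: "m + 1 \<le> card DD"
proof -
  have "4 * ss \<le> ss * ss" using s4 by (intro mult_le_mono1)
  thus ?thesis using cardD ss_ge_r m s4 by linarith
qed

lemma d_eq: "2 ^ (r - 1) * (2 ^ (r - 1) - 1) = ss * ss - ss"
  by (simp add: ss_def right_diff_distrib')

end

theorem theorem3p10:
  fixes r m :: nat
  assumes "card (UNIV :: ('a::field) set) = 2 ^ m"
    and "r \<ge> 3" and "m = 2 * r"
  defines "D \<equiv> (defining_set r :: 'a set)"
  defines "C \<equiv> code_CD_bar m D"
  shows "is_LRC D C (2^(r-1) * (2^r - 1)) (m + 1) (2^(r-1) * (2^(r-1) - 1)) 2 3 \<and>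
         is_LRC D (dual_code D C) (2^(r-1) * (2^r - 1)) (2^(r-1) * (2^r - 1) - m - 1) 4 2
           (2^(r-1) * (2^(r-1) - 1) - 1) \<and>
         (k_optimal D (dual_code D C) \<or> almost_k_optimal D (dual_code D C))"
proof -
  note q = assms(1) and r3 = assms(2) and m = assms(3)
  have r0: "r > 0" using r3 by simp
  have fD: "finite D" unfolding D_def using finite_UNIV_card[OF q] by (rule finite_subset[rotated]) simp
  have nD: "card D = 2^(r-1) * (2^r - 1)" unfolding D_def by (rule card_D[OF q m r0])
  have dd: "2 ^ (r - 1) * (2 ^ (r - 1) - 1) = ss r * ss r - ss r" by (rule d_eq[OF q r3 m])
  have LRC1: "is_LRC D C (2^(r-1) * (2^r - 1)) (m + 1) (2^(r-1) * (2^(r-1) - 1)) 2 3"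
    unfolding is_LRC_def is_code_def
  proof (intro conjI)
    show "linear_code D C" unfolding C_def D_def by (rule linear_C[OF q r3 m])
    show "card D = 2^(r-1) * (2^r - 1)" by (rule nD)
    show "card C = card (UNIV :: bit set) ^ (m + 1)"
      unfolding C_def D_def card_UNIV_bit by (rule card_C[OF q r3 m])
    show "min_dist D C = 2 ^ (r - 1) * (2 ^ (r - 1) - 1)"
      unfolding C_def D_def dd by (rule min_dist_C[OF q r3 m])
    show "card (UNIV :: bit set) = 2" by (rule card_UNIV_bit)
    show "locality D C = 3" unfolding C_def D_def by (rule locality_C[OF q r3 m])
  qed
  have LRC2: "is_LRC D (dual_code D C) (2^(r-1) * (2^r - 1)) (2^(r-1) * (2^r - 1) - m - 1) 4 2
           (2^(r-1) * (2^(r-1) - 1) - 1)"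
    unfolding is_LRC_def is_code_def
  proof (intro conjI)
    show "linear_code D (dual_code D C)" by (rule dual_linear[OF fD])
    show "card D = 2^(r-1) * (2^r - 1)" by (rule nD)
    show "card (dual_code D C) = card (UNIV :: bit set) ^ (2^(r-1) * (2^r - 1) - m - 1)"
      using card_dual[OF q r3 m] nD unfolding C_def D_def card_UNIV_bit by simp
    show "min_dist D (dual_code D C) = 4" unfolding C_def D_def by (rule min_dist_dual[OF q r3 m])
    show "card (UNIV :: bit set) = 2" by (rule card_UNIV_bit)
    show "locality D (dual_code D C) = 2 ^ (r - 1) * (2 ^ (r - 1) - 1) - 1"
      unfolding C_def D_def dd by (rule locality_dual[OF q r3 m])
  qed
  have CM: "CM_bound TYPE(bit) (2^(r-1) * (2^r - 1)) 4 (2^(r-1) * (2^(r-1) - 1) - 1) =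
            (2^(r-1) * (2^r - 1) - m - 1) + 1"
  proof -
    have "CM_bound TYPE(bit) (card D) 4 (ss r * ss r - ss r - 1) = card D - m"
      unfolding D_def by (rule CM_value[OF q r3 m])
    moreover have "m + 1 \<le> card D" unfolding D_def by (rule n_gt_m[OF q r3 m])
    ultimately show ?thesis using nD dd by simp linarith
  qed
  have "almost_k_optimal D (dual_code D C)"
    unfolding almost_k_optimal_def card_UNIV_bit
    by (rule exI[of _ "2^(r-1) * (2^r - 1)"], rule exI[of _ "2^(r-1) * (2^r - 1) - m - 1"],
        rule exI[of _ 4], rule exI[of _ "2^(r-1) * (2^(r-1) - 1) - 1"]) (use LRC2 CM in simp)
  thus ?thesis using LRC1 LRC2 by blast
qed

end
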